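(* Let $C$ be a conformal algebra, $1\le s\le n-1$, $A\in H^{\otimes s}\otimes_H C$, $B\in H^{\otimes(n-s)}\otimes_H C$, $\bar x\in\Bbbk[t]^{\otimes(s-1)}$, $\bar z\in\Bbbk[t]^{\otimes(n-s-1)}$, $y\in\Bbbk[t]$. Then, with $A*B$ the expanded pseudoproduct, $$P^{\bar x\otimes y\otimes\bar z}(A*B)=P^{\,y\,\Pi\bar x_{(1)}}\big(P^{\bar x_{(2)}}(A)*P^{\bar z}(B)\big),$$ where the right-hand side is summed over the Sweedler components of the componentwise coproduct $\bar x_{(1)}\otimes\bar x_{(2)}$ of $\bar x$, and $P^{\bar x_{(2)}}(A),P^{\bar z}(B)\in C$.
   Context: $\Bbbk$ is a field of characteristic $0$, $H=\Bbbk[D]$ with Hopf structure $\Delta(D)=D\otimes1+1\otimes D$, $\varepsilon(D)=0$, $S(D)=-D$; iterated coproduct $\Delta^{(1)}=\mathrm{id}$, $\Delta^{(k+1)}=(\mathrm{id}\otimes\Delta^{(k)})\Delta$; $H$ acts on $H^{\otimes n}$ from the right by $(f_1\otimes\cdots\otimes f_n)h=f_1h_{(1)}\otimes\cdots\otimes f_nh_{(n)}$ and $H^{\otimes n}\otimes_H M$ is taken w.r.t. this action. A conformal algebra is a unital left $H$-module $C$ with bilinear operations $a_{(n)}b$ ($n\ge0$) such that $a_{(n)}b=0$ for $n\gg0$, $(Da)_{(n)}b=-na_{(n-1)}b$, $a_{(n)}(Db)=D(a_{(n)}b)+na_{(n-1)}b$. Pseudoproduct $a*b=\sum_{s\ge0}\frac{(-D)^s}{s!}\otimes1\otimes_H(a_{(s)}b)$;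 expanded pseudoproduct: if $a*b=\sum_i f_i\otimes g_i\otimes_H c_i$ then $(F\otimes_H a)*(G\otimes_H b)=\sum_iF\Delta^{(n)}(f_i)\otimes G\Delta^{(m)}(g_i)\otimes_H c_i$ for $F\in H^{\otimes n},G\in H^{\otimes m}$. On $\Bbbk[t]$ use the coproduct $\Delta(t)=t\otimes1+1\otimes t$ (notation $x_{(1)}\otimes x_{(2)}$), antipode $S(t)=-t$, and the pairing $\langle\cdot,\cdot\rangle:\Bbbk[t]\times H\to\Bbbk$, $\langle t^k,D^m\rangle=k!\,\delta_{k,m}$ (identifying $\Bbbk[t]$ with a subalgebra of the dual algebra $H^*$). Every element of $H^{\otimes n}\otimes_H C$ can be written uniquely as $\sum (h_1\otimes\cdots\otimes h_{n-1}\otimes1)\otimes_H c$, giving an isomorphism $\theta:H^{\otimes n}\otimes_HC\to H^{\otimes(n-1)}\otimes C$, $(h_1\otimes\cdots\otimes h_{n-1}\otimes1)\otimes_Hc\mapsto h_1\otimes\cdots\otimes h_{n-1}\otimes c$. For $x_1,\dots,x_{n-1}\in\Bbbk[t]$ define $P^{x_1\otimes\cdots\otimes x_{n-1}}=(\langle S(x_1),\cdot\rangle\otimes\cdots\otimes\langle S(x_{n-1}),\cdot\rangle\otimes\mathrm{id}_C)\theta:H^{\otimes n}\otimes_HC\to C$, extended linearly to $\Bbbk[t]^{\otimes(n-1)}$; for $n=1$, $P^{\emptyset}$ is the canonical isomorphism $H\otimes_HC\cong C$. For $\bar x=x_1\otimes\cdots\otimes x_k$, $\Pi\bar x=x_1\cdots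 x_k$, and $\bar x_{(1)}\otimes\bar x_{(2)}$ denotes the componentwise coproduct $(x_{1(1)}\otimes\cdots\otimes x_{k(1)})\otimes(x_{1(2)}\otimes\cdots\otimes x_{k(2)})$. *)

theory Defs
  imports "HOL-Computational_Algebra.Polynomial"
begin

text \<open>C is a k-vector space (scalar multiplication sc) with the action of D given by the
  linear map d (so C is a unital k[D]-module); pr j a b is the j-product a_(j) b.\<close>

definition conformal_algebra ::
  "('k::field_char_0 \<Rightarrow> 'c::ab_group_add \<Rightarrow> 'c) \<Rightarrow> ('c \<Rightarrow> 'c) \<Rightarrow> (nat \<Rightarrow> 'c \<Rightarrow> 'c \<Rightarrow> 'c) \<Rightarrow> bool"
  where
  "conformal_algebra sc d pr \<longleftrightarrow>
     vector_space sc \<and> Vector_Spaces.linear sc sc d \<and>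
     (\<forall>j a. Vector_Spaces.linear sc sc (pr j a)) \<and>
     (\<forall>j b. Vector_Spaces.linear sc sc (\<lambda>a. pr j a b)) \<and>
     (\<forall>a b. \<exists>N. \<forall>j\<ge>N. pr j a b = 0) \<and>
     (\<forall>j a b. pr j (d a) b = - sc (of_nat j) (pr (j - 1) a b)) \<and>
     (\<forall>j a b. pr j a (d b) = d (pr j a b) + sc (of_nat j) (pr (j - 1) a b))"

text \<open>An element of H^{\<otimes>n} \<otimes> V (resp. k[t]^{\<otimes>n}) is encoded by its coefficient function
  on the monomial basis D^{a_1} \<otimes> ... \<otimes> D^{a_n} (resp. t^{a_1} \<otimes> ... \<otimes> t^{a_n}),
  indexed by exponent lists of length n.\<close>

definition tens_ok :: "nat \<Rightarrow> (nat list \<Rightarrow> 'a::zero) \<Rightarrow> bool" where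
  "tens_ok n F \<longleftrightarrow> finite {\<alpha>. F \<alpha> \<noteq> 0} \<and> (\<forall>\<alpha>. F \<alpha> \<noteq> 0 \<longrightarrow> length \<alpha> = n)"

definition sing :: "nat list \<Rightarrow> 'a::zero \<Rightarrow> nat list \<Rightarrow> 'a" where
  "sing \<alpha> c = (\<lambda>\<beta>. if \<beta> = \<alpha> then c else 0)"

text \<open>Iterated coproduct of D^p in H: Delta_it k p = \<Delta>^{(k)}(D^p) as element of H^{\<otimes>k},
  with \<Delta>^{(1)} = id, \<Delta>^{(k+1)} = (id \<otimes> \<Delta>^{(k)}) \<Delta>, \<Delta>(D^p) = \<Sum>_j (p choose j) D^j \<otimes> D^{p-j}.\<close>

fun Delta_it :: "nat \<Rightarrow> nat \<Rightarrow> nat list \<Rightarrow> 'k::field_char_0" where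
  "Delta_it 0 p = (\<lambda>\<gamma>. if \<gamma> = [] \<and> p = 0 then 1 else 0)"
| "Delta_it (Suc 0) p = (\<lambda>\<gamma>. if \<gamma> = [p] then 1 else 0)"
| "Delta_it (Suc (Suc k)) p = (\<lambda>\<gamma>. case \<gamma> of [] \<Rightarrow> 0
      | j # \<gamma>' \<Rightarrow> if j \<le> p then of_nat (p choose j) * Delta_it (Suc k) (p - j) \<gamma>' else 0)"

text \<open>Submodule of H^{\<otimes>n} \<otimes> C spanned by the relations F \<Delta>^{(n)}(h) \<otimes> c - F \<otimes> h c
  (F = D^\<alpha> monomial, h = D^m); H^{\<otimes>n} \<otimes>_H C is the quotient by it.\<close>

inductive_set relsp ::
  "('k::field_char_0 \<Rightarrow> 'c::ab_group_add \<Rightarrow> 'c) \<Rightarrow> ('c \<Rightarrow> 'c) \<Rightarrow> nat \<Rightarrow> (nat list \<Rightarrow> 'c) set"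
  for sc d n where
  zero: "(\<lambda>_. 0) \<in> relsp sc d n"
| gen: "length \<alpha> = n \<Longrightarrow>
     (\<lambda>\<beta>. (\<Sum>\<gamma>\<in>{\<gamma>. (Delta_it n m \<gamma> :: 'k) \<noteq> 0}.
              sing (map2 (+) \<alpha> \<gamma>) (sc (Delta_it n m \<gamma>) c) \<beta>) - sing \<alpha> ((d ^^ m) c) \<beta>)
     \<in> relsp sc d n"
| add: "F \<in> relsp sc d n \<Longrightarrow> G \<in> relsp sc d n \<Longrightarrow> (\<lambda>\<beta>. F \<beta> + G \<beta>) \<in> relsp sc d n"
| scale: "F \<in> relsp sc d n \<Longrightarrow> (\<lambda>\<beta>. sc r (F \<beta>)) \<in> relsp sc d n"

text \<open>theta: the unique representative (h_1\<otimes>...\<otimes>h_{n-1}\<otimes>1) \<otimes>_H c of the class of A,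
  read as an element of H^{\<otimes>(n-1)} \<otimes> C.\<close>

definition theta ::
  "('k::field_char_0 \<Rightarrow> 'c::ab_group_add \<Rightarrow> 'c) \<Rightarrow> ('c \<Rightarrow> 'c) \<Rightarrow> nat \<Rightarrow> (nat list \<Rightarrow> 'c) \<Rightarrow> nat list \<Rightarrow> 'c"
  where
  "theta sc d n A =
     (let N = (THE N. tens_ok n N \<and> (\<forall>\<alpha>. N \<alpha> \<noteq> 0 \<longrightarrow> last \<alpha> = 0) \<and>
                      (\<lambda>\<beta>. A \<beta> - N \<beta>) \<in> relsp sc d n)
      in (\<lambda>\<beta>. N (\<beta> @ [0])))"

text \<open>Pairing <p, D^m> on k[t] x H with <t^k, D^m> = k! \<delta>_{k,m}; antipode S(t) = -t.\<close>

definition hpair :: "'k::field_char_0 poly \<Rightarrow> nat \<Rightarrow> 'k" where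
  "hpair p m = coeff p m * fact m"

definition antip :: "'k::field_char_0 poly \<Rightarrow> 'k poly" where
  "antip p = pcompose p [:0, -1:]"

text \<open>P^X for X \<in> k[t]^{\<otimes>(n-1)} (coefficient function), applied to an element of
  H^{\<otimes>n} \<otimes>_H C (given by a representative in H^{\<otimes>n} \<otimes> C).\<close>

definition Pmap ::
  "('k::field_char_0 \<Rightarrow> 'c::ab_group_add \<Rightarrow> 'c) \<Rightarrow> ('c \<Rightarrow> 'c) \<Rightarrow> nat \<Rightarrow> (nat list \<Rightarrow> 'k)
     \<Rightarrow> (nat list \<Rightarrow> 'c) \<Rightarrow> 'c"
  where
  "Pmap sc d n X A =
     (let N = theta sc d n A in
      \<Sum>\<kappa>\<in>{\<kappa>. X \<kappa> \<noteq> 0}. \<Sum>\<beta>\<in>{\<beta>. N \<beta> \<noteq> 0}.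
        sc (X \<kappa> * (\<Prod>i<n - 1. hpair (antip (monom 1 (\<kappa> ! i))) (\<beta> ! i))) (N \<beta>))"

definition poly1 :: "'k::field_char_0 poly \<Rightarrow> nat list \<Rightarrow> 'k" where
  "poly1 w = (\<lambda>\<kappa>. case \<kappa> of [k] \<Rightarrow> coeff w k | _ \<Rightarrow> 0)"

text \<open>Pseudoproduct a * b = \<Sum>_s (-D)^s/s! \<otimes> 1 \<otimes>_H a_(s) b, as element of H^{\<otimes>2} \<otimes> C.\<close>

definition pseudo ::
  "('k::field_char_0 \<Rightarrow> 'c::ab_group_add \<Rightarrow> 'c) \<Rightarrow> (nat \<Rightarrow> 'c \<Rightarrow> 'c \<Rightarrow> 'c) \<Rightarrow> 'c \<Rightarrow> 'c \<Rightarrow> nat list \<Rightarrow> 'c"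
  where
  "pseudo sc pr a b = (\<lambda>\<alpha>. case \<alpha> of [s, q] \<Rightarrow>
       if q = 0 then sc ((-1) ^ s / fact s) (pr s a b) else 0 | _ \<Rightarrow> 0)"

text \<open>Expanded pseudoproduct of A \<in> H^{\<otimes>s} \<otimes>_H C and B \<in> H^{\<otimes>m} \<otimes>_H C (on representatives):
  (D^\<alpha> \<otimes>_H a) * (D^\<beta> \<otimes>_H b) = \<Sum> D^\<alpha> \<Delta>^{(s)}(f_i) \<otimes> D^\<beta> \<Delta>^{(m)}(g_i) \<otimes>_H c_i,
  extended bilinearly.\<close>

definition EP ::
  "('k::field_char_0 \<Rightarrow> 'c::ab_group_add \<Rightarrow> 'c) \<Rightarrow> (nat \<Rightarrow> 'c \<Rightarrow> 'c \<Rightarrow> 'c) \<Rightarrow> nat \<Rightarrow> nat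
     \<Rightarrow> (nat list \<Rightarrow> 'c) \<Rightarrow> (nat list \<Rightarrow> 'c) \<Rightarrow> nat list \<Rightarrow> 'c"
  where
  "EP sc pr s m A B = (\<lambda>\<kappa>.
     \<Sum>\<alpha>\<in>{\<alpha>. A \<alpha> \<noteq> 0}. \<Sum>\<beta>\<in>{\<beta>. B \<beta> \<noteq> 0}.
       (let ab = pseudo sc pr (A \<alpha>) (B \<beta>) in
        \<Sum>\<rho>\<in>{\<rho>. ab \<rho> \<noteq> 0}.
        \<Sum>\<gamma>\<in>{\<gamma>. (Delta_it s (\<rho> ! 0) \<gamma> :: 'k) \<noteq> 0}.
        \<Sum>\<delta>\<in>{\<delta>. (Delta_it m (\<rho> ! 1) \<delta> :: 'k) \<noteq> 0}.
          (if \<kappa> = map2 (+) \<alpha> \<gamma> @ map2 (+) \<beta> \<delta>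
           then sc (Delta_it s (\<rho> ! 0) \<gamma> * Delta_it m (\<rho> ! 1) \<delta>) (ab \<rho>) else 0)))"

definition tens3 :: "nat \<Rightarrow> nat \<Rightarrow> (nat list \<Rightarrow> 'k::field_char_0) \<Rightarrow> 'k poly \<Rightarrow> (nat list \<Rightarrow> 'k)
     \<Rightarrow> nat list \<Rightarrow> 'k" where
  "tens3 r q X y Z = (\<lambda>\<kappa>. if length \<kappa> = r + 1 + q
      then X (take r \<kappa>) * coeff y (\<kappa> ! r) * Z (drop (r + 1) \<kappa>) else 0)"

end

theory Submission
  imports Defs
begin

definition ff :: "nat \<Rightarrow> nat \<Rightarrow> nat" where "ff x m = (\<Prod>i<m. x - i)"

lemma ff_0[simp]: "ff x 0 = 1" by (simp add: ff_def)
lemma ff_Suc: "ff x (Suc m) = ff x m * (x - m)" by (simp add: ff_def)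
lemma ff_zero: "x < m \<Longrightarrow> ff x m = 0"
  unfolding ff_def by (rule prod_zero) auto
lemma ff_binom: "ff x m = fact m * (x choose m)"
proof (induction m)
  case (Suc m)
  have "(x - m) * (x choose m) = Suc m * (x choose Suc m)"
    using binomial_absorb_comp[of x m] binomial_absorption[of m x] by metis
  then have "fact m * (x choose m) * (x - m) = fact (Suc m) * (x choose Suc m)"
    by (metis fact_Suc mult.commute mult.left_commute of_nat_id)
  then show ?case using Suc by (simp only: ff_Suc)
qed simp
lemma ff_nz: "m \<le> x \<Longrightarrow> ff x m \<noteq> 0"
  by (simp add: ff_binom)
lemma ff_nz_iff: "ff x m \<noteq> 0 \<longleftrightarrow> m \<le> x"
  using ff_nz ff_zero by (metis not_le)
lemma ff_self: "ff x x = fact x" by (simp add: ff_binom)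
lemma ff_Suc_Suc: "ff (Suc x) (Suc m) = Suc x * ff x m"
  unfolding ff_def by (simp only: prod.lessThan_Suc_shift) simp
lemma ff_pascal: "ff (Suc p) (Suc M) = ff p (Suc M) + Suc M * ff p M"
proof (cases "M \<le> p")
  case True
  have "ff (Suc p) (Suc M) = Suc p * ff p M" by (rule ff_Suc_Suc)
  also have "\<dots> = ((p - M) + Suc M) * ff p M" using True by simp
  also have "\<dots> = ff p (Suc M) + Suc M * ff p M"
    by (simp add: ff_Suc distrib_left mult.commute)
  finally show ?thesis .
next
  case False
  then show ?thesis by (simp add: ff_Suc_Suc ff_Suc ff_zero)
qed
lemma ff_add: "ff K (a + g) = ff K a * ff (K - a) g"
  by (induction g) (auto simp: ff_Suc algebra_simps)


definition Lset :: "nat \<Rightarrow> nat \<Rightarrow> nat list set" where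
  "Lset n M = {\<gamma>. set \<gamma> \<subseteq> {..M} \<and> length \<gamma> = n}"

lemma finite_Lset[simp]: "finite (Lset n M)"
  unfolding Lset_def by (rule finite_lists_length_eq) simp

lemma Delta_supp:
  "(Delta_it n m \<gamma> :: 'k::field_char_0) \<noteq> 0 \<Longrightarrow> length \<gamma> = n \<and> sum_list \<gamma> = m"
proof (induction n m arbitrary: \<gamma> rule: Delta_it.induct)
  case (1 p)
  then show ?case by (auto split: if_splits)
next
  case (2 p)
  then show ?case by (auto split: if_splits)
next
  case (3 k p)
  then obtain j \<gamma>' where g: "\<gamma> = j # \<gamma>'" by (cases \<gamma>) auto
  with 3(2) have jp: "j \<le> p" and nz: "(Delta_it (Suc k) (p - j) \<gamma>' :: 'k) \<noteq> 0"
    by (auto split: if_splits)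
  from 3(1)[OF _ nz] show ?case using g jp by auto
qed

lemma Delta_supp_L:
  "(Delta_it n m \<gamma> :: 'k::field_char_0) \<noteq> 0 \<Longrightarrow> \<gamma> \<in> Lset n m"
proof -
  assume a: "(Delta_it n m \<gamma> :: 'k) \<noteq> 0"
  have "\<forall>x\<in>set \<gamma>. x \<le> m" using Delta_supp[OF a] member_le_sum_list[of _ \<gamma>] by auto
  then show ?thesis using Delta_supp[OF a] unfolding Lset_def by auto
qed

lemma Delta_supp_sub: "{\<gamma>. (Delta_it n m \<gamma> :: 'k::field_char_0) \<noteq> 0} \<subseteq> Lset n m"
  using Delta_supp_L by blast

lemma finite_Delta_supp[simp]: "finite {\<gamma>. (Delta_it n m \<gamma> :: 'k::field_char_0) \<noteq> 0}"
  using Delta_supp_sub finite_Lset finite_subset by blast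


lemma Delta_0: "(Delta_it n 0 \<gamma> :: 'k::field_char_0) = (if \<gamma> = replicate n 0 then 1 else 0)"
proof (induction n arbitrary: \<gamma>)
  case 0
  then show ?case by simp
next
  case (Suc n)
  show ?case
  proof (cases n)
    case 0
    then show ?thesis by simp
  next
    case (Suc k)
    show ?thesis
    proof (cases \<gamma>)
      case Nil
      then show ?thesis using Suc by simp
    next
      case (Cons j g)
      then show ?thesis using Suc.IH Suc by auto
    qed
  qed
qed

lemma Delta_pascal:
  "length \<gamma> = Suc k \<Longrightarrow> (Delta_it (Suc k) (Suc m) \<gamma> :: 'k::field_char_0) =
    (\<Sum>i<Suc k. if 1 \<le> \<gamma> ! i then Delta_it (Suc k) m (\<gamma>[i := \<gamma> ! i - 1]) else 0)"
proof (induction k arbitrary: m \<gamma>)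
  case 0
  then obtain g where "\<gamma> = [g]" by (cases \<gamma>) auto
  then show ?case by auto
next
  case (Suc k)
  then obtain j g where G: "\<gamma> = j # g" and lg: "length g = Suc k" by (cases \<gamma>) auto
  have shift: "(\<Sum>i<Suc k. if 1 \<le> g ! i then (Delta_it (Suc (Suc k)) m (j # g[i := g ! i - 1]) :: 'k) else 0)
      = (if j \<le> m then of_nat (m choose j) * Delta_it (Suc k) (Suc (m - j)) g else 0)"
  proof (cases "j \<le> m")
    case True
    have "(\<Sum>i<Suc k. if 1 \<le> g ! i then (Delta_it (Suc (Suc k)) m (j # g[i := g ! i - 1]) :: 'k) else 0)
       = (\<Sum>i<Suc k. of_nat (m choose j) * (if 1 \<le> g ! i then Delta_it (Suc k) (m - j) (g[i := g ! i - 1]) else 0))"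
      using True by (intro sum.cong) auto
    also have "\<dots> = of_nat (m choose j) * Delta_it (Suc k) (Suc (m - j)) g"
      by (subst Suc.IH[OF lg]) (simp only: sum_distrib_left)
    finally show ?thesis using True by simp
  qed (simp, intro sum.neutral, auto)
  have "(\<Sum>i<Suc (Suc k). if 1 \<le> \<gamma> ! i then (Delta_it (Suc (Suc k)) m (\<gamma>[i := \<gamma> ! i - 1]) :: 'k) else 0)
     = (if 1 \<le> j then Delta_it (Suc (Suc k)) m ((j - 1) # g) else 0) +
       (\<Sum>i<Suc k. if 1 \<le> g ! i then (Delta_it (Suc (Suc k)) m (j # g[i := g ! i - 1]) :: 'k) else 0)"
    unfolding G by (subst sum.lessThan_Suc_shift, rule arg_cong2[where f="(+)"], simp, rule sum.cong, rule refl, simp)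
  also have "\<dots> = (if 1 \<le> j then Delta_it (Suc (Suc k)) m ((j - 1) # g) else 0) +
      (if j \<le> m then of_nat (m choose j) * Delta_it (Suc k) (Suc (m - j)) g else 0)"
    by (simp only: shift)
  also have "\<dots> = Delta_it (Suc (Suc k)) (Suc m) \<gamma>"
  proof (cases j)
    case 0
    then show ?thesis using G by simp
  next
    case (Suc j')
    show ?thesis
    proof (cases "j' \<le> m")
      case True
      then have "Suc (m - Suc j') = m - j'" if "Suc j' \<le> m" using that by simp
      show ?thesis using G Suc True
        by (cases "j' = m") (auto simp: Suc_diff_le Suc_diff_Suc algebra_simps)
    next
      case False
      then show ?thesis using G Suc by simp
    qed
  qed
  finally show ?case by simp
qed


lemma Delta_reindex:
  fixes h :: "nat list \<Rightarrow> 'k::field_char_0 \<Rightarrow> 'b::ab_group_add"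
  assumes add: "\<And>\<gamma> x y. h \<gamma> (x + y) = h \<gamma> x + h \<gamma> y"
  shows "(\<Sum>\<gamma>\<in>{\<gamma>. (Delta_it (Suc k) (Suc m) \<gamma> :: 'k) \<noteq> 0}. h \<gamma> (Delta_it (Suc k) (Suc m) \<gamma>)) =
    (\<Sum>i<Suc k. \<Sum>\<gamma>\<in>{\<gamma>. (Delta_it (Suc k) m \<gamma> :: 'k) \<noteq> 0}. h (\<gamma>[i := \<gamma> ! i + 1]) (Delta_it (Suc k) m \<gamma>))"
proof -
  have h0: "h \<gamma> 0 = 0" for \<gamma> using add[of \<gamma> 0 0] by simp
  have hsum: "h \<gamma> (sum f I) = (\<Sum>i\<in>I. h \<gamma> (f i))" for \<gamma> f and I :: "'x set"
    by (induct I rule: infinite_finite_induct) (simp_all add: h0 add)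
  let ?L1 = "Lset (Suc k) (Suc m)" and ?L0 = "Lset (Suc k) m"
  let ?D1 = "\<lambda>\<gamma>. (Delta_it (Suc k) (Suc m) \<gamma> :: 'k)" and ?D0 = "\<lambda>\<gamma>. (Delta_it (Suc k) m \<gamma> :: 'k)"
  have "(\<Sum>\<gamma>\<in>{\<gamma>. ?D1 \<gamma> \<noteq> 0}. h \<gamma> (?D1 \<gamma>)) = (\<Sum>\<gamma>\<in>?L1. h \<gamma> (?D1 \<gamma>))"
    by (rule sum.mono_neutral_left) (auto simp: Delta_supp_sub h0)
  also have "\<dots> = (\<Sum>\<gamma>\<in>?L1. \<Sum>i<Suc k. h \<gamma> (if 1 \<le> \<gamma>!i then ?D0 (\<gamma>[i:=\<gamma>!i-1]) else 0))"
    by (intro sum.cong refl) (simp add: Delta_pascal Lset_def hsum del: sum.lessThan_Suc)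
  also have "\<dots> = (\<Sum>i<Suc k. \<Sum>\<gamma>\<in>?L1. h \<gamma> (if 1 \<le> \<gamma>!i then ?D0 (\<gamma>[i:=\<gamma>!i-1]) else 0))"
    by (rule sum.swap)
  also have "\<dots> = (\<Sum>i<Suc k. \<Sum>\<gamma>\<in>{\<gamma>. ?D0 \<gamma> \<noteq> 0}. h (\<gamma>[i := \<gamma> ! i + 1]) (?D0 \<gamma>))"
  proof (rule sum.cong[OF refl])
    fix i assume i: "i \<in> {..<Suc k}"
    define up where "up = (\<lambda>\<gamma>::nat list. \<gamma>[i := \<gamma>!i+1])"
    have upd: "(up \<gamma>)[i := up \<gamma> ! i - 1] = \<gamma>" "up \<gamma> ! i = \<gamma> ! i + 1" if "\<gamma> \<in> ?L0" for \<gamma>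
      using that i unfolding up_def Lset_def by auto
    have inj: "inj_on up ?L0"
      by (metis (no_types, lifting) inj_onI upd(1))
    have img: "up ` ?L0 \<subseteq> ?L1"
    proof
      fix x assume "x \<in> up ` ?L0"
      then obtain \<gamma> where g: "\<gamma> \<in> ?L0" "x = up \<gamma>" by auto
      have "set x \<subseteq> {..Suc m}"
      proof
        fix v assume "v \<in> set x"
        then obtain j where j: "j < length x" "x ! j = v" by (auto simp: in_set_conv_nth)
        have lx: "length x = length \<gamma>" using g unfolding up_def by simp
        have "\<gamma> ! j \<le> m" using g(1) j lx unfolding Lset_def by (auto simp: nth_mem subset_iff)
        moreover have "\<gamma> ! i \<le> m" using g(1) i unfolding Lset_def by (auto simp: nth_mem subset_iff)
        ultimately show "v \<in> {..Suc m}" using j g(2) lx unfolding up_def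
          by (cases "j = i") auto
      qed
      then show "x \<in> ?L1" using g unfolding up_def Lset_def by auto
    qed
    have "(\<Sum>\<gamma>\<in>{\<gamma>. ?D0 \<gamma> \<noteq> 0}. h (up \<gamma>) (?D0 \<gamma>)) = (\<Sum>\<gamma>\<in>?L0. h (up \<gamma>) (?D0 \<gamma>))"
      by (rule sum.mono_neutral_left) (auto simp: Delta_supp_sub h0)
    also have "\<dots> = (\<Sum>\<gamma>\<in>?L0. h (up \<gamma>) (if 1 \<le> up \<gamma> ! i then ?D0 ((up \<gamma>)[i := up \<gamma> ! i - 1]) else 0))"
      by (intro sum.cong refl) (subst upd(1), assumption, simp add: upd(2))
    also have "\<dots> = (\<Sum>\<gamma>\<in>up ` ?L0. h \<gamma> (if 1 \<le> \<gamma>!i then ?D0 (\<gamma>[i:=\<gamma>!i-1]) else 0))"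
      by (rule sum.reindex[OF inj, symmetric, unfolded comp_def])
    also have "\<dots> = (\<Sum>\<gamma>\<in>?L1. h \<gamma> (if 1 \<le> \<gamma>!i then ?D0 (\<gamma>[i:=\<gamma>!i-1]) else 0))"
    proof (rule sum.mono_neutral_left[OF finite_Lset img])
      show "\<forall>\<gamma>\<in>?L1 - up ` ?L0. h \<gamma> (if 1 \<le> \<gamma>!i then ?D0 (\<gamma>[i:=\<gamma>!i-1]) else 0) = 0"
      proof
        fix \<gamma> assume g: "\<gamma> \<in> ?L1 - up ` ?L0"
        show "h \<gamma> (if 1 \<le> \<gamma>!i then ?D0 (\<gamma>[i:=\<gamma>!i-1]) else 0) = 0"
        proof (cases "1 \<le> \<gamma>!i")
          case True
          have "?D0 (\<gamma>[i:=\<gamma>!i-1]) = 0"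
          proof (rule ccontr)
            assume "?D0 (\<gamma>[i:=\<gamma>!i-1]) \<noteq> 0"
            then have mem: "\<gamma>[i:=\<gamma>!i-1] \<in> ?L0" by (rule Delta_supp_L)
            have "length \<gamma> = Suc k" using g unfolding Lset_def by auto
            then have "up (\<gamma>[i:=\<gamma>!i-1]) = \<gamma>" using True i unfolding up_def by auto
            then show False using g mem by force
          qed
          then show ?thesis using True h0 by simp
        qed (simp add: h0)
      qed
    qed
    finally show "(\<Sum>\<gamma>\<in>?L1. h \<gamma> (if 1 \<le> \<gamma>!i then ?D0 (\<gamma>[i:=\<gamma>!i-1]) else 0)) =
        (\<Sum>\<gamma>\<in>{\<gamma>. ?D0 \<gamma> \<noteq> 0}. h (\<gamma>[i := \<gamma> ! i + 1]) (?D0 \<gamma>))" unfolding up_def by (rule sym)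
  qed
  finally show ?thesis .
qed


definition psi :: "nat list \<Rightarrow> nat list \<Rightarrow> 'k::field_char_0" where
  "psi \<kappa> \<alpha> = (-1) ^ sum_list (butlast \<alpha>) * of_nat (\<Prod>i<length \<kappa>. ff (\<kappa>!i) (\<alpha>!i)) *
      of_nat (ff (last \<alpha>) (sum_list \<kappa> - sum_list (butlast \<alpha>)))"

lemma psi_snoc: "length a = length \<kappa> \<Longrightarrow> psi \<kappa> (a @ [p]) =
   (-1) ^ sum_list a * of_nat (\<Prod>i<length \<kappa>. ff (\<kappa>!i) (a!i)) * of_nat (ff p (sum_list \<kappa> - sum_list a))"
  unfolding psi_def by (simp add: nth_append)

lemma sum_list_lt: "sum_list xs = (\<Sum>i<length xs. xs ! i)"
  by (simp add: sum_list_sum_nth atLeast0LessThan)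

lemma prod_upd:
  assumes "i < length \<kappa>" "length a = length \<kappa>"
  shows "(\<Prod>j<length \<kappa>. ff (\<kappa>!j) (a[i:=Suc (a!i)] ! j)) = (\<kappa>!i - a!i) * (\<Prod>j<length \<kappa>. ff (\<kappa>!j) (a!j))"
proof -
  have fin: "finite {..<length \<kappa>}" by simp
  have i: "i \<in> {..<length \<kappa>}" using assms by simp
  define f' where "f' = (\<lambda>j. ff (\<kappa>!j) (a[i:=Suc (a!i)] ! j))"
  define f where "f = (\<lambda>j. ff (\<kappa>!j) (a ! j))"
  have A: "(\<Prod>j<length \<kappa>. f' j) = f' i * (\<Prod>j\<in>{..<length \<kappa>}-{i}. f' j)" by (rule prod.remove[OF fin i])
  have B: "(\<Prod>j<length \<kappa>. f j) = f i * (\<Prod>j\<in>{..<length \<kappa>}-{i}. f j)" by (rule prod.remove[OF fin i])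
  have C: "(\<Prod>j\<in>{..<length \<kappa>}-{i}. f' j) = (\<Prod>j\<in>{..<length \<kappa>}-{i}. f j)"
    by (intro prod.cong refl) (auto simp: f_def f'_def)
  have D: "f' i = f i * (\<kappa>!i - a!i)" using assms by (simp add: ff_Suc f_def f'_def)
  show ?thesis unfolding f_def[symmetric] f'_def[symmetric] A B C D by simp
qed

lemma sum_diff_list:
  assumes "(\<Prod>j<length \<kappa>. ff (\<kappa>!j) (a!j)) \<noteq> 0" "length a = length \<kappa>"
  shows "(\<Sum>j<length \<kappa>. \<kappa>!j - a!j) = sum_list \<kappa> - sum_list a"
proof -
  have le: "a!j \<le> \<kappa>!j" if "j < length \<kappa>" for j
    using assms(1) that ff_nz_iff by fastforce
  have "(\<Sum>j<length \<kappa>. \<kappa>!j - a!j) = (\<Sum>j<length \<kappa>. \<kappa>!j) - (\<Sum>j<length \<kappa>. a!j)"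
    by (rule sum_subtractf_nat) (simp add: le)
  then show ?thesis using assms(2) by (simp add: sum_list_lt)
qed

lemma psi_zero_sum: "length \<alpha> = Suc (length \<kappa>) \<Longrightarrow> sum_list \<alpha> < sum_list \<kappa> \<Longrightarrow> psi \<kappa> \<alpha> = 0"
proof -
  assume l: "length \<alpha> = Suc (length \<kappa>)" and s: "sum_list \<alpha> < sum_list \<kappa>"
  obtain a p where ap: "\<alpha> = a @ [p]" using l by (cases \<alpha> rule: rev_cases) auto
  have la: "length a = length \<kappa>" using l ap by simp
  show ?thesis
  proof (cases "(\<Prod>j<length \<kappa>. ff (\<kappa>!j) (a!j)) = 0")
    case True
    then show ?thesis using ap la by (simp add: psi_snoc)
  next
    case False
    have le: "a!j \<le> \<kappa>!j" if "j < length \<kappa>" for j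
      using False that ff_nz_iff by fastforce
    have "sum_list a \<le> sum_list \<kappa>" using la by (simp add: sum_list_lt) (intro sum_mono, simp add: le)
    then have "p < sum_list \<kappa> - sum_list a" using s ap by simp
    then show ?thesis using ap la by (simp add: psi_snoc ff_zero)
  qed
qed

lemma psi_step:
  assumes l: "length \<alpha> = Suc (length \<kappa>)"
  shows "(\<Sum>i<Suc (length \<kappa>). (psi \<kappa> (\<alpha>[i := \<alpha>!i+1]) :: 'k::field_char_0)) = psi \<kappa> \<alpha>"
proof -
  obtain a p where ap: "\<alpha> = a @ [p]" using l by (cases \<alpha> rule: rev_cases) auto
  have la: "length a = length \<kappa>" using l ap by simp
  define F where "F = (\<Prod>j<length \<kappa>. ff (\<kappa>!j) (a!j))"
  define M where "M = sum_list \<kappa> - sum_list a"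
  have last: "psi \<kappa> (\<alpha>[length \<kappa> := Suc (\<alpha>!length \<kappa>)]) = (-1)^sum_list a * of_nat F * of_nat (ff (Suc p) M)"
    using ap la by (simp add: psi_snoc list_update_append F_def M_def nth_append)
  have mid: "psi \<kappa> (\<alpha>[i := Suc (\<alpha>!i)]) = - ((-1)^sum_list a * of_nat F * of_nat (ff p (M - 1)) * of_nat (\<kappa>!i - a!i))"
    if i: "i < length \<kappa>" for i
  proof -
    have e: "\<alpha>[i := Suc (\<alpha>!i)] = a[i := Suc (a!i)] @ [p]" using ap la i by (simp add: list_update_append nth_append)
    have sl: "sum_list (a[i := Suc (a!i)]) = Suc (sum_list a)" using i la by (simp add: sum_list_update)
    show ?thesis unfolding e using i la
      by (simp add: psi_snoc sl prod_upd F_def M_def mult_ac del: of_nat_prod)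
  qed
  have "(\<Sum>i<Suc (length \<kappa>). (psi \<kappa> (\<alpha>[i := \<alpha>!i+1]) :: 'k)) =
     (\<Sum>i<length \<kappa>. - ((-1)^sum_list a * of_nat F * of_nat (ff p (M - 1)) * of_nat (\<kappa>!i - a!i))) +
      (-1)^sum_list a * of_nat F * of_nat (ff (Suc p) M)"
    by (simp add: last mid del: of_nat_mult)
  also have "(\<Sum>i<length \<kappa>. - ((-1)^sum_list a * of_nat F * of_nat (ff p (M - 1)) * of_nat (\<kappa>!i - a!i) :: 'k))
     = - ((-1)^sum_list a * of_nat F * of_nat (ff p (M - 1)) * of_nat (\<Sum>i<length \<kappa>. \<kappa>!i - a!i))"
    by (simp add: sum_negf sum_distrib_left del: of_nat_mult)
  also have "\<dots> = - ((-1)^sum_list a * of_nat F * of_nat (ff p (M - 1)) * of_nat M)"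
  proof (cases "F = 0")
    case False
    then show ?thesis using sum_diff_list[of \<kappa> a] la unfolding F_def M_def by simp
  qed simp
  also have "- ((-1)^sum_list a * of_nat F * of_nat (ff p (M - 1)) * of_nat M) +
      (-1)^sum_list a * of_nat F * of_nat (ff (Suc p) M) = ((-1)^sum_list a * of_nat F * of_nat (ff p M) :: 'k)"
  proof (cases M)
    case 0
    then show ?thesis by simp
  next
    case (Suc M')
    have "ff (Suc p) M = ff p M + M * ff p (M - 1)"
      using Suc ff_pascal[of p M'] by simp
    then have "(of_nat (ff (Suc p) M) :: 'k) = of_nat (ff p M) + of_nat M * of_nat (ff p (M - 1))"
      by (metis of_nat_add of_nat_mult)
    then show ?thesis by (simp add: algebra_simps)
  qed
  also have "\<dots> = psi \<kappa> \<alpha>" using ap la by (simp add: psi_snoc F_def M_def)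
  finally show ?thesis .
qed

lemma map2_plus_rep: "length \<alpha> = n \<Longrightarrow> map2 (+) \<alpha> (replicate n 0) = (\<alpha>::nat list)"
  by (induction \<alpha> arbitrary: n) auto

lemma map2_plus_upd: "length \<alpha> = length \<gamma> \<Longrightarrow> i < length \<gamma> \<Longrightarrow>
   map2 (+) \<alpha> (\<gamma>[i := Suc (\<gamma>!i)]) = map2 (+) (\<alpha>[i := Suc (\<alpha>!i)]) (\<gamma>::nat list)"
  by (rule nth_equalityI) (auto simp: nth_list_update)

lemma psi_gen:
  assumes "length \<alpha> = Suc (length \<kappa>)"
  shows "(\<Sum>\<gamma>\<in>{\<gamma>. (Delta_it (Suc (length \<kappa>)) m \<gamma> :: 'k) \<noteq> 0}.
            Delta_it (Suc (length \<kappa>)) m \<gamma> * psi \<kappa> (map2 (+) \<alpha> \<gamma>)) = (psi \<kappa> \<alpha> :: 'k::field_char_0)"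
  using assms
proof (induction m arbitrary: \<alpha>)
  case 0
  have "{\<gamma>. (Delta_it (Suc (length \<kappa>)) 0 \<gamma> :: 'k) \<noteq> 0} = {replicate (Suc (length \<kappa>)) 0}"
    by (auto simp: Delta_0 simp del: replicate_Suc)
  then show ?case using 0 by (simp add: Delta_0 map2_plus_rep del: replicate_Suc)
next
  case (Suc m)
  let ?n = "Suc (length \<kappa>)"
  have "(\<Sum>\<gamma>\<in>{\<gamma>. (Delta_it ?n (Suc m) \<gamma> :: 'k) \<noteq> 0}. Delta_it ?n (Suc m) \<gamma> * (psi \<kappa> (map2 (+) \<alpha> \<gamma>) :: 'k)) =
     (\<Sum>i<?n. \<Sum>\<gamma>\<in>{\<gamma>. (Delta_it ?n m \<gamma> :: 'k) \<noteq> 0}. Delta_it ?n m \<gamma> * psi \<kappa> (map2 (+) \<alpha> (\<gamma>[i := \<gamma>!i+1])))"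
    using Delta_reindex[where h="\<lambda>\<gamma> (x::'k). x * psi \<kappa> (map2 (+) \<alpha> \<gamma>)" and k="length \<kappa>" and m=m]
    by (simp add: algebra_simps)
  also have "\<dots> = (\<Sum>i<?n. \<Sum>\<gamma>\<in>{\<gamma>. (Delta_it ?n m \<gamma> :: 'k) \<noteq> 0}. Delta_it ?n m \<gamma> * psi \<kappa> (map2 (+) (\<alpha>[i := \<alpha>!i+1]) \<gamma>))"
  proof (rule sum.cong[OF refl], rule sum.cong[OF refl])
    fix i \<gamma> assume i: "i \<in> {..<?n}" and g: "\<gamma> \<in> {\<gamma>. (Delta_it ?n m \<gamma> :: 'k) \<noteq> 0}"
    have "length \<gamma> = ?n" using g Delta_supp by blast
    then show "Delta_it ?n m \<gamma> * psi \<kappa> (map2 (+) \<alpha> (\<gamma>[i := \<gamma>!i+1])) =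
        (Delta_it ?n m \<gamma> :: 'k) * psi \<kappa> (map2 (+) (\<alpha>[i := \<alpha>!i+1]) \<gamma>)"
      using i Suc.prems by (simp add: map2_plus_upd)
  qed
  also have "\<dots> = (\<Sum>i<?n. (psi \<kappa> (\<alpha>[i := \<alpha>!i+1]) :: 'k))"
    by (rule sum.cong[OF refl], rule Suc.IH) (use Suc.prems in simp)
  also have "\<dots> = psi \<kappa> \<alpha>" by (rule psi_step[OF Suc.prems])
  finally show ?case .
qed


lemma sum_list_map2_plus: "length \<alpha> = length \<gamma> \<Longrightarrow> sum_list (map2 (+) \<alpha> \<gamma>) = sum_list \<alpha> + sum_list (\<gamma>::nat list)"
  by (induction \<alpha> arbitrary: \<gamma>) (auto simp: Suc_length_conv)

lemma sing_apply: "sing \<alpha> c \<beta> = (if \<beta> = \<alpha> then c else 0)" by (simp add: sing_def)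

definition fin :: "(nat list \<Rightarrow> 'a::zero) \<Rightarrow> bool" where "fin F \<longleftrightarrow> finite {\<alpha>. F \<alpha> \<noteq> 0}"

lemma fin_sing[simp]: "fin (sing \<alpha> c)"
  unfolding fin_def sing_def by (rule finite_subset[of _ "{\<alpha>}"]) auto

lemma fin_add: "fin (F::nat list \<Rightarrow> 'a::comm_monoid_add) \<Longrightarrow> fin G \<Longrightarrow> fin (\<lambda>\<beta>. F \<beta> + G \<beta>)"
  unfolding fin_def by (rule finite_subset[of _ "{\<alpha>. F \<alpha> \<noteq> 0} \<union> {\<alpha>. G \<alpha> \<noteq> 0}"]) auto

lemma fin_diff: "fin (F::nat list \<Rightarrow> 'a::ab_group_add) \<Longrightarrow> fin G \<Longrightarrow> fin (\<lambda>\<beta>. F \<beta> - G \<beta>)"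
  unfolding fin_def by (rule finite_subset[of _ "{\<alpha>. F \<alpha> \<noteq> 0} \<union> {\<alpha>. G \<alpha> \<noteq> 0}"]) auto

lemma fin_sum: "finite I \<Longrightarrow> (\<And>i. i \<in> I \<Longrightarrow> fin (F i :: nat list \<Rightarrow> 'a::comm_monoid_add)) \<Longrightarrow> fin (\<lambda>\<beta>. \<Sum>i\<in>I. F i \<beta>)"
proof (induction I rule: finite_induct)
  case empty
  then show ?case by (simp add: fin_def)
next
  case (insert x I)
  then show ?case by (simp add: fin_add)
qed

lemma tens_ok_fin: "tens_ok n F \<Longrightarrow> fin F" by (simp add: tens_ok_def fin_def)

locale conf =
  fixes sc :: "'k::field_char_0 \<Rightarrow> 'c::ab_group_add \<Rightarrow> 'c"
    and d :: "'c \<Rightarrow> 'c" and pr :: "nat \<Rightarrow> 'c \<Rightarrow> 'c \<Rightarrow> 'c"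
  assumes ca: "conformal_algebra sc d pr"
begin

lemma vs: "vector_space sc" using ca unfolding conformal_algebra_def by blast

sublocale vector_space sc by (rule vs)

lemma hom_d: "module_hom sc sc d"
  using ca by (simp add: conformal_algebra_def module_hom_iff_linear)
lemma hom_pr1: "module_hom sc sc (pr j a)"
  using ca by (simp add: conformal_algebra_def module_hom_iff_linear)
lemma hom_pr2: "module_hom sc sc (\<lambda>a. pr j a b)"
  using ca by (simp add: conformal_algebra_def module_hom_iff_linear)
lemma hom_dpow: "module_hom sc sc (d ^^ e)"
proof (induction e)
  case 0
  then show ?case by (simp add: module_hom_iff_linear linear_ident)
next
  case (Suc e)
  then show ?case using module_hom_compose[OF Suc hom_d] by (simp add: comp_def)
qed

lemma dpow_add: "(d^^e) (x + y) = (d^^e) x + (d^^e) y" using module_hom.add[OF hom_dpow] .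
lemma dpow_scale: "(d^^e) (sc r x) = sc r ((d^^e) x)" using module_hom.scale[OF hom_dpow] .
lemma dpow_zero[simp]: "(d^^e) 0 = 0" using module_hom.zero[OF hom_dpow] .
lemma dpow_diff: "(d^^e) (x - y) = (d^^e) x - (d^^e) y" using module_hom.diff[OF hom_dpow] .
lemma dpow_sum: "(d^^e) (sum g S) = (\<Sum>a\<in>S. (d^^e) (g a))" using module_hom.sum[OF hom_dpow] .

lemma pr_add1: "pr j a (x + y) = pr j a x + pr j a y" using module_hom.add[OF hom_pr1] .
lemma pr_scale1: "pr j a (sc r x) = sc r (pr j a x)" using module_hom.scale[OF hom_pr1] .
lemma pr_zero1[simp]: "pr j a 0 = 0" using module_hom.zero[OF hom_pr1] .
lemma pr_sum1: "pr j a (sum g S) = (\<Sum>x\<in>S. pr j a (g x))" using module_hom.sum[OF hom_pr1] .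
lemma pr_add2: "pr j (x + y) b = pr j x b + pr j y b" using module_hom.add[OF hom_pr2] by simp
lemma pr_scale2: "pr j (sc r x) b = sc r (pr j x b)" using module_hom.scale[OF hom_pr2] by simp
lemma pr_zero2[simp]: "pr j 0 b = 0" using module_hom.zero[OF hom_pr2] by simp
lemma pr_sum2: "pr j (sum g S) b = (\<Sum>x\<in>S. pr j (g x) b)" using module_hom.sum[OF hom_pr2] by simp

definition Psi :: "nat list \<Rightarrow> (nat list \<Rightarrow> 'c) \<Rightarrow> 'c" where
  "Psi \<kappa> R = (\<Sum>\<alpha>\<in>{\<alpha>. R \<alpha> \<noteq> 0}. sc (psi \<kappa> \<alpha>) ((d ^^ (sum_list \<alpha> - sum_list \<kappa>)) (R \<alpha>)))"

lemma Psi_sub: "finite S \<Longrightarrow> {\<alpha>. R \<alpha> \<noteq> 0} \<subseteq> S \<Longrightarrow>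
   Psi \<kappa> R = (\<Sum>\<alpha>\<in>S. sc (psi \<kappa> \<alpha>) ((d ^^ (sum_list \<alpha> - sum_list \<kappa>)) (R \<alpha>)))"
  unfolding Psi_def by (rule sum.mono_neutral_left) auto

lemma Psi_add: "fin F \<Longrightarrow> fin G \<Longrightarrow> Psi \<kappa> (\<lambda>\<beta>. F \<beta> + G \<beta>) = Psi \<kappa> F + Psi \<kappa> G"
proof -
  assume f: "fin F" "fin G"
  let ?S = "{\<alpha>. F \<alpha> \<noteq> 0} \<union> {\<alpha>. G \<alpha> \<noteq> 0}"
  have fS: "finite ?S" using f by (simp add: fin_def)
  show ?thesis
    by (subst (1 2 3) Psi_sub[OF fS]) (auto simp: dpow_add scale_right_distrib sum.distrib)
qed

lemma Psi_diff: "fin F \<Longrightarrow> fin G \<Longrightarrow> Psi \<kappa> (\<lambda>\<beta>. F \<beta> - G \<beta>) = Psi \<kappa> F - Psi \<kappa> G"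
proof -
  assume f: "fin F" "fin G"
  let ?S = "{\<alpha>. F \<alpha> \<noteq> 0} \<union> {\<alpha>. G \<alpha> \<noteq> 0}"
  have fS: "finite ?S" using f by (simp add: fin_def)
  show ?thesis
    by (subst (1 2 3) Psi_sub[OF fS]) (auto simp: dpow_diff scale_right_diff_distrib sum_subtractf)
qed

lemma Psi_scale: "fin F \<Longrightarrow> Psi \<kappa> (\<lambda>\<beta>. sc r (F \<beta>)) = sc r (Psi \<kappa> F)"
proof -
  assume f: "fin F"
  let ?S = "{\<alpha>. F \<alpha> \<noteq> 0}"
  have fS: "finite ?S" using f by (simp add: fin_def)
  show ?thesis
    by (subst (1 2) Psi_sub[OF fS]) (auto simp: dpow_scale scale_sum_right mult.commute)
qed

lemma Psi_zero[simp]: "Psi \<kappa> (\<lambda>_. 0) = 0" by (simp add: Psi_def)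

lemma Psi_sum: "finite I \<Longrightarrow> (\<And>i. i \<in> I \<Longrightarrow> fin (F i)) \<Longrightarrow>
    Psi \<kappa> (\<lambda>\<beta>. \<Sum>i\<in>I. F i \<beta>) = (\<Sum>i\<in>I. Psi \<kappa> (F i))"
proof (induction I rule: finite_induct)
  case empty
  then show ?case by simp
next
  case (insert x I)
  have "Psi \<kappa> (\<lambda>\<beta>. \<Sum>i\<in>insert x I. F i \<beta>) = Psi \<kappa> (\<lambda>\<beta>. F x \<beta> + (\<Sum>i\<in>I. F i \<beta>))"
    using insert by simp
  also have "\<dots> = Psi \<kappa> (F x) + Psi \<kappa> (\<lambda>\<beta>. \<Sum>i\<in>I. F i \<beta>)"
    by (rule Psi_add) (use insert fin_sum in auto)
  finally show ?case using insert by simp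
qed

lemma Psi_sing: "Psi \<kappa> (sing \<alpha> c) = sc (psi \<kappa> \<alpha>) ((d ^^ (sum_list \<alpha> - sum_list \<kappa>)) c)"
  by (subst Psi_sub[of "{\<alpha>}"]) (auto simp: sing_def)

lemma relsp_ok: "F \<in> relsp sc d n \<Longrightarrow> tens_ok n F"
proof (induction rule: relsp.induct)
  case zero
  then show ?case by (simp add: tens_ok_def)
next
  case (gen \<alpha> m c)
  let ?G = "{\<gamma>. (Delta_it n m \<gamma> :: 'k) \<noteq> 0}"
  have sub: "{\<beta>. (\<Sum>\<gamma>\<in>?G. sing (map2 (+) \<alpha> \<gamma>) (sc (Delta_it n m \<gamma>) c) \<beta>) - sing \<alpha> ((d ^^ m) c) \<beta> \<noteq> 0}
      \<subseteq> (\<lambda>\<gamma>. map2 (+) \<alpha> \<gamma>) ` ?G \<union> {\<alpha>}"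
  proof
    fix \<beta> assume b: "\<beta> \<in> {\<beta>. (\<Sum>\<gamma>\<in>?G. sing (map2 (+) \<alpha> \<gamma>) (sc (Delta_it n m \<gamma>) c) \<beta>) - sing \<alpha> ((d ^^ m) c) \<beta> \<noteq> 0}"
    show "\<beta> \<in> (\<lambda>\<gamma>. map2 (+) \<alpha> \<gamma>) ` ?G \<union> {\<alpha>}"
    proof (rule ccontr)
      assume "\<beta> \<notin> (\<lambda>\<gamma>. map2 (+) \<alpha> \<gamma>) ` ?G \<union> {\<alpha>}"
      then have "(\<Sum>\<gamma>\<in>?G. sing (map2 (+) \<alpha> \<gamma>) (sc (Delta_it n m \<gamma>) c) \<beta>) = 0" "sing \<alpha> ((d ^^ m) c) \<beta> = 0"
        by (auto simp: sing_def intro!: sum.neutral)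
      then show False using b by simp
    qed
  qed
  have len: "length \<beta> = n" if "\<beta> \<in> (\<lambda>\<gamma>. map2 (+) \<alpha> \<gamma>) ` ?G \<union> {\<alpha>}" for \<beta>
    using that gen Delta_supp by fastforce
  show ?case unfolding tens_ok_def
    using sub len finite_subset[OF sub] by auto
next
  case (add F G)
  have "F \<alpha> \<noteq> 0 \<or> G \<alpha> \<noteq> 0" if "F \<alpha> + G \<alpha> \<noteq> 0" for \<alpha> using that by auto
  then show ?case using add unfolding tens_ok_def
    by (auto intro: finite_subset[of _ "{\<alpha>. F \<alpha> \<noteq> 0} \<union> {\<alpha>. G \<alpha> \<noteq> 0}"])
next
  case (scale F r)
  then show ?case unfolding tens_ok_def
    by (auto intro: finite_subset[of _ "{\<alpha>. F \<alpha> \<noteq> 0}"])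
qed

lemma Psi_relsp: "F \<in> relsp sc d n \<Longrightarrow> n = Suc (length \<kappa>) \<Longrightarrow> Psi \<kappa> F = 0"
proof (induction rule: relsp.induct)
  case zero
  then show ?case by simp
next
  case (gen \<alpha> m c)
  let ?G = "{\<gamma>. (Delta_it n m \<gamma> :: 'k) \<noteq> 0}"
  let ?e = "sum_list \<alpha> + m - sum_list \<kappa>"
  have "Psi \<kappa> (\<lambda>\<beta>. (\<Sum>\<gamma>\<in>?G. sing (map2 (+) \<alpha> \<gamma>) (sc (Delta_it n m \<gamma>) c) \<beta>) - sing \<alpha> ((d ^^ m) c) \<beta>)
     = Psi \<kappa> (\<lambda>\<beta>. \<Sum>\<gamma>\<in>?G. sing (map2 (+) \<alpha> \<gamma>) (sc (Delta_it n m \<gamma>) c) \<beta>) - Psi \<kappa> (sing \<alpha> ((d ^^ m) c))"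
    by (rule Psi_diff) (auto intro: fin_sum)
  also have "Psi \<kappa> (\<lambda>\<beta>. \<Sum>\<gamma>\<in>?G. sing (map2 (+) \<alpha> \<gamma>) (sc (Delta_it n m \<gamma>) c) \<beta>) =
      (\<Sum>\<gamma>\<in>?G. Psi \<kappa> (sing (map2 (+) \<alpha> \<gamma>) (sc (Delta_it n m \<gamma>) c)))"
    by (rule Psi_sum) auto
  also have "\<dots> = (\<Sum>\<gamma>\<in>?G. sc (Delta_it n m \<gamma> * psi \<kappa> (map2 (+) \<alpha> \<gamma>)) ((d ^^ ?e) c))"
  proof (rule sum.cong[OF refl])
    fix \<gamma> assume "\<gamma> \<in> ?G"
    then have "length \<gamma> = n" "sum_list \<gamma> = m" using Delta_supp by blast+
    then have "sum_list (map2 (+) \<alpha> \<gamma>) = sum_list \<alpha> + m" using gen(1) by (simp add: sum_list_map2_plus)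
    then show "Psi \<kappa> (sing (map2 (+) \<alpha> \<gamma>) (sc (Delta_it n m \<gamma>) c)) = sc (Delta_it n m \<gamma> * psi \<kappa> (map2 (+) \<alpha> \<gamma>)) ((d ^^ ?e) c)"
      by (simp add: Psi_sing dpow_scale mult.commute)
  qed
  also have "\<dots> = sc (psi \<kappa> \<alpha>) ((d ^^ ?e) c)"
    using gen by (simp add: psi_gen scale_sum_left[symmetric])
  also have "Psi \<kappa> (sing \<alpha> ((d ^^ m) c)) = sc (psi \<kappa> \<alpha>) ((d ^^ ?e) c)"
  proof (cases "psi \<kappa> \<alpha> = (0::'k)")
    case False
    then have "sum_list \<kappa> \<le> sum_list \<alpha>" using psi_zero_sum[of \<alpha> \<kappa>] gen by fastforce
    then have "?e = (sum_list \<alpha> - sum_list \<kappa>) + m" by simp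
    then show ?thesis by (simp add: Psi_sing funpow_add)
  qed (simp add: Psi_sing)
  finally show ?case by simp
next
  case (add F G)
  have "fin F" "fin G" using add.hyps relsp_ok tens_ok_fin by blast+
  then show ?case using add by (simp add: Psi_add)
next
  case (scale F r)
  have "fin F" using scale.hyps relsp_ok tens_ok_fin by blast
  then show ?case using scale by (simp add: Psi_scale)
qed

end


definition normal :: "nat \<Rightarrow> (nat list \<Rightarrow> 'c::zero) \<Rightarrow> bool" where
  "normal n N \<longleftrightarrow> tens_ok n N \<and> (\<forall>\<alpha>. N \<alpha> \<noteq> 0 \<longrightarrow> last \<alpha> = 0)"

lemma eq_of_le_sum:
  fixes a \<kappa> :: "nat list"
  assumes "length a = length \<kappa>" "\<And>j. j < length \<kappa> \<Longrightarrow> a!j \<le> \<kappa>!j" "sum_list \<kappa> \<le> sum_list a"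
  shows "a = \<kappa>"
proof -
  have "(\<Sum>j<length \<kappa>. \<kappa>!j - a!j) = (\<Sum>j<length \<kappa>. \<kappa>!j) - (\<Sum>j<length \<kappa>. a!j)"
    by (rule sum_subtractf_nat) (simp add: assms(2))
  also have "\<dots> = 0" using assms(1,3) by (simp add: sum_list_lt)
  finally have "\<forall>j\<in>{..<length \<kappa>}. \<kappa>!j - a!j = 0" by simp
  then have "a!j = \<kappa>!j" if "j < length \<kappa>" for j using assms(2)[OF that] that
    by (metis diff_is_0_eq antisym lessThan_iff)
  then show ?thesis using assms(1) by (simp add: nth_equalityI)
qed

lemma psi_normal_zero:
  assumes "length a = length \<kappa>" "a \<noteq> \<kappa>"
  shows "psi \<kappa> (a @ [0]) = 0"
proof (rule ccontr)
  assume nz: "psi \<kappa> (a @ [0]) \<noteq> 0"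
  then have F: "(\<Prod>j<length \<kappa>. ff (\<kappa>!j) (a!j)) \<noteq> 0" and M: "ff 0 (sum_list \<kappa> - sum_list a) \<noteq> 0"
    using assms by (auto simp: psi_snoc)
  have le: "a!j \<le> \<kappa>!j" if "j < length \<kappa>" for j using F that ff_nz_iff by fastforce
  have "sum_list \<kappa> \<le> sum_list a" using M ff_nz_iff by fastforce
  then have "a = \<kappa>" using eq_of_le_sum[OF assms(1) le] by blast
  then show False using assms by simp
qed

lemma psi_diag: "psi \<kappa> (\<kappa> @ [0]) = (-1) ^ sum_list \<kappa> * of_nat (\<Prod>j<length \<kappa>. fact (\<kappa>!j))"
  by (simp add: psi_snoc ff_self)

lemma psi_diag_nz: "(psi \<kappa> (\<kappa> @ [0]) :: 'k::field_char_0) \<noteq> 0"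
  unfolding psi_diag by (simp add: prod_zero_iff)

lemma hpair_antip: "hpair (antip (monom 1 k)) b = (if b = k then (-1)^k * fact k else (0::'k::field_char_0))"
proof -
  have "[:0, -1:] = (monom (-1) (Suc 0) :: 'k poly)" by (simp add: monom_Suc monom_0)
  then show ?thesis unfolding hpair_def antip_def by (simp add: coeff_monom)
qed

lemma hp_prod:
  assumes "length \<beta> = length \<kappa>"
  shows "(\<Prod>i<length \<kappa>. hpair (antip (monom 1 (\<kappa>!i))) (\<beta>!i)) = (if \<beta> = \<kappa> then psi \<kappa> (\<kappa>@[0]) else (0::'k::field_char_0))"
proof (cases "\<beta> = \<kappa>")
  case True
  then show ?thesis by (simp add: hpair_antip psi_diag prod.distrib power_sum[symmetric] sum_list_lt)
next
  case False
  then obtain i where "i < length \<kappa>" "\<beta>!i \<noteq> \<kappa>!i" using assms by (auto simp: list_eq_iff_nth_eq)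
  then show ?thesis using False by (auto simp: hpair_antip intro!: prod_zero bexI[of _ i])
qed

lemma map2_plus_unit: "i < length \<alpha> \<Longrightarrow>
   map2 (+) \<alpha> ((replicate (length \<alpha>) 0)[i := Suc 0]) = \<alpha>[i := Suc (\<alpha>!i)]"
  by (rule nth_equalityI) (auto simp: nth_list_update)

context conf
begin

lemma relsp_diff: "F \<in> relsp sc d n \<Longrightarrow> G \<in> relsp sc d n \<Longrightarrow> (\<lambda>\<beta>. F \<beta> - G \<beta>) \<in> relsp sc d n"
proof -
  assume F: "F \<in> relsp sc d n" and G: "G \<in> relsp sc d n"
  have "(\<lambda>\<beta>. F \<beta> + sc (-1) (G \<beta>)) \<in> relsp sc d n" by (rule relsp.add[OF F relsp.scale[OF G]])
  then show ?thesis by simp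
qed

lemma relsp_add: "F \<in> relsp sc d n \<Longrightarrow> G \<in> relsp sc d n \<Longrightarrow> (\<lambda>\<beta>. F \<beta> + G \<beta>) \<in> relsp sc d n"
  by (rule relsp.add)

lemma relsp_sum: "finite I \<Longrightarrow> (\<And>i. i \<in> I \<Longrightarrow> F i \<in> relsp sc d n) \<Longrightarrow> (\<lambda>\<beta>. \<Sum>i\<in>I. F i \<beta>) \<in> relsp sc d n"
proof (induction I rule: finite_induct)
  case empty
  then show ?case by (simp add: relsp.zero)
next
  case (insert x I)
  then show ?case using relsp.add[of "F x" sc d n "\<lambda>\<beta>. \<Sum>i\<in>I. F i \<beta>"] by simp
qed

lemma relsp_cong: "F \<in> relsp sc d n \<Longrightarrow> F = G \<Longrightarrow> G \<in> relsp sc d n" by simp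

lemma normal_diff: "normal n F \<Longrightarrow> normal n G \<Longrightarrow> normal n (\<lambda>\<beta>. F \<beta> - (G \<beta> :: 'c))"
proof -
  assume a: "normal n F" "normal n G"
  have o: "F \<beta> \<noteq> 0 \<or> G \<beta> \<noteq> 0" if "F \<beta> - G \<beta> \<noteq> 0" for \<beta> using that by auto
  have "{\<beta>. F \<beta> - G \<beta> \<noteq> 0} \<subseteq> {\<alpha>. F \<alpha> \<noteq> 0} \<union> {\<alpha>. G \<alpha> \<noteq> 0}" using o by blast
  then show ?thesis using a o unfolding normal_def tens_ok_def by (meson finite_UnI finite_subset)
qed

lemma normal_sum: "finite I \<Longrightarrow> (\<And>i. i \<in> I \<Longrightarrow> normal n (F i :: nat list \<Rightarrow> 'c)) \<Longrightarrow> normal n (\<lambda>\<beta>. \<Sum>i\<in>I. F i \<beta>)"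
proof (induction I rule: finite_induct)
  case empty
  then show ?case by (simp add: normal_def tens_ok_def)
next
  case (insert x I)
  have a: "normal n (F x)" "normal n (\<lambda>\<beta>. \<Sum>i\<in>I. F i \<beta>)" using insert by auto
  have "normal n (\<lambda>\<beta>. F x \<beta> + (\<Sum>i\<in>I. F i \<beta>))"
  proof -
    have o: "F x \<beta> \<noteq> 0 \<or> (\<Sum>i\<in>I. F i \<beta>) \<noteq> 0" if "F x \<beta> + (\<Sum>i\<in>I. F i \<beta>) \<noteq> 0" for \<beta> using that by auto
    have "{\<beta>. F x \<beta> + (\<Sum>i\<in>I. F i \<beta>) \<noteq> 0} \<subseteq> {\<alpha>. F x \<alpha> \<noteq> 0} \<union> {\<alpha>. (\<Sum>i\<in>I. F i \<alpha>) \<noteq> 0}" using o by blast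
    then show ?thesis using a o unfolding normal_def tens_ok_def by (meson finite_UnI finite_subset)
  qed
  then show ?case using insert by simp
qed

lemma Psi_normal:
  assumes N: "normal (Suc (length \<kappa>)) N"
  shows "Psi \<kappa> N = sc (psi \<kappa> (\<kappa>@[0])) (N (\<kappa>@[0]))"
proof -
  let ?S = "{\<alpha>. N \<alpha> \<noteq> 0} \<union> {\<kappa>@[0]}"
  have fS: "finite ?S" using N by (simp add: normal_def tens_ok_def)
  have "Psi \<kappa> N = (\<Sum>\<alpha>\<in>?S. sc (psi \<kappa> \<alpha>) ((d ^^ (sum_list \<alpha> - sum_list \<kappa>)) (N \<alpha>)))"
    by (rule Psi_sub[OF fS]) auto
  also have "\<dots> = (\<Sum>\<alpha>\<in>{\<kappa>@[0]}. sc (psi \<kappa> \<alpha>) ((d ^^ (sum_list \<alpha> - sum_list \<kappa>)) (N \<alpha>)))"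
  proof (rule sum.mono_neutral_right[OF fS])
    show "{\<kappa>@[0]} \<subseteq> ?S" by auto
    show "\<forall>\<alpha>\<in>?S - {\<kappa>@[0]}. sc (psi \<kappa> \<alpha>) ((d ^^ (sum_list \<alpha> - sum_list \<kappa>)) (N \<alpha>)) = 0"
    proof
      fix \<alpha> assume a: "\<alpha> \<in> ?S - {\<kappa>@[0]}"
      then have nz: "N \<alpha> \<noteq> 0" by auto
      then have l: "length \<alpha> = Suc (length \<kappa>)" and z: "last \<alpha> = 0" using N by (auto simp: normal_def tens_ok_def)
      obtain b p where bp: "\<alpha> = b @ [p]" using l by (cases \<alpha> rule: rev_cases) auto
      have "p = 0" using z bp by simp
      moreover have "length b = length \<kappa>" using l bp by simp
      moreover have "b \<noteq> \<kappa>" using a bp \<open>p = 0\<close> by auto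
      ultimately have "(psi \<kappa> \<alpha> :: 'k) = 0" using bp psi_normal_zero by blast
      then show "sc (psi \<kappa> \<alpha>) ((d ^^ (sum_list \<alpha> - sum_list \<kappa>)) (N \<alpha>)) = 0" by simp
    qed
  qed
  finally show ?thesis by simp
qed

lemma normal_unique:
  assumes N1: "normal (Suc r) N1" and N2: "normal (Suc r) N2"
    and R: "(\<lambda>\<beta>. N1 \<beta> - N2 \<beta>) \<in> relsp sc d (Suc r)"
  shows "N1 = N2"
proof -
  have eq: "N1 (\<kappa>@[0]) = N2 (\<kappa>@[0])" if l: "length \<kappa> = r" for \<kappa>
  proof -
    have "Psi \<kappa> (\<lambda>\<beta>. N1 \<beta> - N2 \<beta>) = 0" using Psi_relsp[OF R] l by simp
    moreover have "fin N1" "fin N2" using N1 N2 by (auto simp: normal_def tens_ok_fin)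
    ultimately have "Psi \<kappa> N1 = Psi \<kappa> N2" by (simp add: Psi_diff)
    then have "sc (psi \<kappa> (\<kappa>@[0])) (N1 (\<kappa>@[0])) = sc (psi \<kappa> (\<kappa>@[0])) (N2 (\<kappa>@[0]))"
      using N1 N2 l by (simp add: Psi_normal)
    then have "sc (inverse (psi \<kappa> (\<kappa>@[0]))) (sc (psi \<kappa> (\<kappa>@[0])) (N1 (\<kappa>@[0]))) =
        sc (inverse (psi \<kappa> (\<kappa>@[0]))) (sc (psi \<kappa> (\<kappa>@[0])) (N2 (\<kappa>@[0])))" by simp
    moreover have "(psi \<kappa> (\<kappa>@[0]) :: 'k) \<noteq> 0" by (rule psi_diag_nz)
    ultimately show ?thesis by simp
  qed
  show ?thesis
  proof
    fix \<alpha>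
    show "N1 \<alpha> = N2 \<alpha>"
    proof (cases "N1 \<alpha> = 0 \<and> N2 \<alpha> = 0")
      case False
      then have "length \<alpha> = Suc r \<and> last \<alpha> = 0" using N1 N2 by (auto simp: normal_def tens_ok_def)
      then obtain b where "\<alpha> = b @ [0]" "length b = r" by (cases \<alpha> rule: rev_cases) auto
      then show ?thesis using eq by simp
    qed simp
  qed
qed

lemma gen1:
  assumes l: "length \<alpha> = Suc r"
  shows "(\<lambda>\<beta>. (\<Sum>i<Suc r. sing (\<alpha>[i := Suc (\<alpha>!i)]) c \<beta>) - sing \<alpha> (d c) \<beta>) \<in> relsp sc d (Suc r)"
proof -
  have g: "(\<lambda>\<beta>. (\<Sum>\<gamma>\<in>{\<gamma>. (Delta_it (Suc r) 1 \<gamma> :: 'k) \<noteq> 0}. sing (map2 (+) \<alpha> \<gamma>) (sc (Delta_it (Suc r) 1 \<gamma>) c) \<beta>)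
      - sing \<alpha> ((d ^^ 1) c) \<beta>) \<in> relsp sc d (Suc r)"
    by (rule relsp.gen[OF l])
  have "(\<Sum>\<gamma>\<in>{\<gamma>. (Delta_it (Suc r) 1 \<gamma> :: 'k) \<noteq> 0}. sing (map2 (+) \<alpha> \<gamma>) (sc (Delta_it (Suc r) 1 \<gamma>) c) \<beta>)
      = (\<Sum>i<Suc r. sing (\<alpha>[i := Suc (\<alpha>!i)]) c \<beta>)" for \<beta>
  proof -
    have "(\<Sum>\<gamma>\<in>{\<gamma>. (Delta_it (Suc r) (Suc 0) \<gamma> :: 'k) \<noteq> 0}. sing (map2 (+) \<alpha> \<gamma>) (sc (Delta_it (Suc r) (Suc 0) \<gamma>) c) \<beta>)
      = (\<Sum>i<Suc r. \<Sum>\<gamma>\<in>{\<gamma>. (Delta_it (Suc r) 0 \<gamma> :: 'k) \<noteq> 0}. sing (map2 (+) \<alpha> (\<gamma>[i := \<gamma> ! i + 1])) (sc (Delta_it (Suc r) 0 \<gamma>) c) \<beta>)"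
      by (rule Delta_reindex[where h="\<lambda>\<gamma> (x::'k). sing (map2 (+) \<alpha> \<gamma>) (sc x c) \<beta>"])
         (simp add: sing_def scale_left_distrib)
    also have "\<dots> = (\<Sum>i<Suc r. sing (\<alpha>[i := Suc (\<alpha>!i)]) c \<beta>)"
    proof (rule sum.cong[OF refl])
      fix i assume i: "i \<in> {..<Suc r}"
      have "{\<gamma>. (Delta_it (Suc r) 0 \<gamma> :: 'k) \<noteq> 0} = {replicate (Suc r) 0}"
        by (auto simp: Delta_0 simp del: replicate_Suc)
      then show "(\<Sum>\<gamma>\<in>{\<gamma>. (Delta_it (Suc r) 0 \<gamma> :: 'k) \<noteq> 0}. sing (map2 (+) \<alpha> (\<gamma>[i := \<gamma> ! i + 1])) (sc (Delta_it (Suc r) 0 \<gamma>) c) \<beta>)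
         = sing (\<alpha>[i := Suc (\<alpha>!i)]) c \<beta>"
        using i l map2_plus_unit[of i \<alpha>] by (simp add: Delta_0 del: replicate_Suc)
    qed
    finally show ?thesis by simp
  qed
  then show ?thesis using g by simp
qed

lemma exists_mono:
  "length a = r \<Longrightarrow> \<exists>N. normal (Suc r) N \<and> (\<lambda>\<beta>. sing (a @ [p]) c \<beta> - N \<beta>) \<in> relsp sc d (Suc r)"
proof (induction p arbitrary: a c)
  case 0
  have "normal (Suc r) (sing (a @ [0]) c)" using 0 by (simp add: normal_def tens_ok_def sing_def)
  moreover have "(\<lambda>\<beta>. sing (a @ [0]) c \<beta> - sing (a @ [0]) c \<beta>) \<in> relsp sc d (Suc r)" by (simp add: relsp.zero)
  ultimately show ?case by blast
next
  case (Suc p)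
  let ?\<alpha> = "a @ [p]"
  have l: "length ?\<alpha> = Suc r" using Suc.prems by simp
  obtain N0 where N0: "normal (Suc r) N0" "(\<lambda>\<beta>. sing ?\<alpha> (d c) \<beta> - N0 \<beta>) \<in> relsp sc d (Suc r)"
    using Suc.IH[OF Suc.prems] by blast
  have "\<forall>i\<in>{..<r}. \<exists>N. normal (Suc r) N \<and> (\<lambda>\<beta>. sing (a[i := Suc (a!i)] @ [p]) c \<beta> - N \<beta>) \<in> relsp sc d (Suc r)"
    using Suc.IH Suc.prems by simp
  then obtain NI where NI: "\<And>i. i \<in> {..<r} \<Longrightarrow> normal (Suc r) (NI i) \<and>
      (\<lambda>\<beta>. sing (a[i := Suc (a!i)] @ [p]) c \<beta> - NI i \<beta>) \<in> relsp sc d (Suc r)"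
    by metis
  define N where "N = (\<lambda>\<beta>. N0 \<beta> - (\<Sum>i<r. NI i \<beta>))"
  have nN: "normal (Suc r) N" unfolding N_def
    by (rule normal_diff[OF N0(1) normal_sum]) (use NI in auto)
  have G: "(\<lambda>\<beta>. (\<Sum>i<Suc r. sing (?\<alpha>[i := Suc (?\<alpha>!i)]) c \<beta>) - sing ?\<alpha> (d c) \<beta>) \<in> relsp sc d (Suc r)"
    by (rule gen1[OF l])
  have S: "(\<lambda>\<beta>. \<Sum>i<r. sing (a[i := Suc (a!i)] @ [p]) c \<beta> - NI i \<beta>) \<in> relsp sc d (Suc r)"
    by (rule relsp_sum) (use NI in auto)
  have upd: "?\<alpha>[i := Suc (?\<alpha>!i)] = a[i := Suc (a!i)] @ [p]" if "i < r" for i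
    using that Suc.prems by (simp add: list_update_append nth_append)
  have updr: "?\<alpha>[r := Suc (?\<alpha>!r)] = a @ [Suc p]"
    using Suc.prems by (simp add: list_update_append nth_append)
  have "(\<lambda>\<beta>. ((\<Sum>i<Suc r. sing (?\<alpha>[i := Suc (?\<alpha>!i)]) c \<beta>) - sing ?\<alpha> (d c) \<beta>)
        + (sing ?\<alpha> (d c) \<beta> - N0 \<beta>) - (\<Sum>i<r. sing (a[i := Suc (a!i)] @ [p]) c \<beta> - NI i \<beta>))
      \<in> relsp sc d (Suc r)"
    by (rule relsp_diff[OF relsp_add[OF G N0(2)] S])
  moreover have "(\<lambda>\<beta>. ((\<Sum>i<Suc r. sing (?\<alpha>[i := Suc (?\<alpha>!i)]) c \<beta>) - sing ?\<alpha> (d c) \<beta>)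
        + (sing ?\<alpha> (d c) \<beta> - N0 \<beta>) - (\<Sum>i<r. sing (a[i := Suc (a!i)] @ [p]) c \<beta> - NI i \<beta>))
      = (\<lambda>\<beta>. sing (a @ [Suc p]) c \<beta> - N \<beta>)"
  proof
    fix \<beta>
    have "(\<Sum>i<Suc r. sing (?\<alpha>[i := Suc (?\<alpha>!i)]) c \<beta>) = (\<Sum>i<r. sing (a[i := Suc (a!i)] @ [p]) c \<beta>) + sing (a @ [Suc p]) c \<beta>"
      by (simp add: upd updr del: list_update_append)
    then show "((\<Sum>i<Suc r. sing (?\<alpha>[i := Suc (?\<alpha>!i)]) c \<beta>) - sing ?\<alpha> (d c) \<beta>)
        + (sing ?\<alpha> (d c) \<beta> - N0 \<beta>) - (\<Sum>i<r. sing (a[i := Suc (a!i)] @ [p]) c \<beta> - NI i \<beta>)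
      = sing (a @ [Suc p]) c \<beta> - N \<beta>"
      unfolding N_def by (simp add: sum_subtractf algebra_simps del: list_update_append)
  qed
  ultimately show ?case using nN by auto
qed

lemma exists_normal:
  assumes R: "tens_ok (Suc r) R"
  shows "\<exists>N. normal (Suc r) N \<and> (\<lambda>\<beta>. R \<beta> - N \<beta>) \<in> relsp sc d (Suc r)"
proof -
  let ?S = "{\<alpha>. R \<alpha> \<noteq> 0}"
  have fS: "finite ?S" using R by (simp add: tens_ok_def)
  have "\<forall>\<alpha>\<in>?S. \<exists>N. normal (Suc r) N \<and> (\<lambda>\<beta>. sing \<alpha> (R \<alpha>) \<beta> - N \<beta>) \<in> relsp sc d (Suc r)"
  proof
    fix \<alpha> assume "\<alpha> \<in> ?S"
    then have l: "length \<alpha> = Suc r" using R by (simp add: tens_ok_def)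
    then obtain a p where "\<alpha> = a @ [p]" "length a = r" by (cases \<alpha> rule: rev_cases) auto
    then show "\<exists>N. normal (Suc r) N \<and> (\<lambda>\<beta>. sing \<alpha> (R \<alpha>) \<beta> - N \<beta>) \<in> relsp sc d (Suc r)"
      using exists_mono by blast
  qed
  then obtain NA where NA: "\<And>\<alpha>. \<alpha> \<in> ?S \<Longrightarrow> normal (Suc r) (NA \<alpha>) \<and> (\<lambda>\<beta>. sing \<alpha> (R \<alpha>) \<beta> - NA \<alpha> \<beta>) \<in> relsp sc d (Suc r)"
    by metis
  define N where "N = (\<lambda>\<beta>. \<Sum>\<alpha>\<in>?S. NA \<alpha> \<beta>)"
  have "normal (Suc r) N" unfolding N_def by (rule normal_sum[OF fS]) (use NA in auto)
  moreover have "(\<lambda>\<beta>. \<Sum>\<alpha>\<in>?S. sing \<alpha> (R \<alpha>) \<beta> - NA \<alpha> \<beta>) \<in> relsp sc d (Suc r)"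
    by (rule relsp_sum[OF fS]) (use NA in auto)
  moreover have "(\<lambda>\<beta>. \<Sum>\<alpha>\<in>?S. sing \<alpha> (R \<alpha>) \<beta> - NA \<alpha> \<beta>) = (\<lambda>\<beta>. R \<beta> - N \<beta>)"
  proof
    fix \<beta>
    have "(\<Sum>\<alpha>\<in>?S. sing \<alpha> (R \<alpha>) \<beta>) = R \<beta>"
    proof (cases "R \<beta> = 0")
      case True
      then show ?thesis by (auto simp: sing_def intro!: sum.neutral)
    next
      case False
      then show ?thesis using fS by (simp add: sing_def sum.delta')
    qed
    then show "(\<Sum>\<alpha>\<in>?S. sing \<alpha> (R \<alpha>) \<beta> - NA \<alpha> \<beta>) = R \<beta> - N \<beta>"
      unfolding N_def by (simp add: sum_subtractf)
  qed
  ultimately show ?thesis by auto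
qed

lemma theta_eq:
  assumes R: "tens_ok (Suc r) R" and N: "normal (Suc r) N" and RN: "(\<lambda>\<beta>. R \<beta> - N \<beta>) \<in> relsp sc d (Suc r)"
  shows "theta sc d (Suc r) R = (\<lambda>\<beta>. N (\<beta> @ [0]))"
proof -
  have "(THE N. tens_ok (Suc r) N \<and> (\<forall>\<alpha>. N \<alpha> \<noteq> 0 \<longrightarrow> last \<alpha> = 0) \<and> (\<lambda>\<beta>. R \<beta> - N \<beta>) \<in> relsp sc d (Suc r)) = N"
  proof (rule the_equality)
    show "tens_ok (Suc r) N \<and> (\<forall>\<alpha>. N \<alpha> \<noteq> 0 \<longrightarrow> last \<alpha> = 0) \<and> (\<lambda>\<beta>. R \<beta> - N \<beta>) \<in> relsp sc d (Suc r)"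
      using N RN by (simp add: normal_def)
    fix N' assume N': "tens_ok (Suc r) N' \<and> (\<forall>\<alpha>. N' \<alpha> \<noteq> 0 \<longrightarrow> last \<alpha> = 0) \<and> (\<lambda>\<beta>. R \<beta> - N' \<beta>) \<in> relsp sc d (Suc r)"
    have "(\<lambda>\<beta>. (R \<beta> - N \<beta>) - (R \<beta> - N' \<beta>)) \<in> relsp sc d (Suc r)"
      using relsp_diff[OF RN] N' by blast
    then have "(\<lambda>\<beta>. N' \<beta> - N \<beta>) \<in> relsp sc d (Suc r)" by simp
    then show "N' = N" using normal_unique[of r N' N] N N' by (simp add: normal_def)
  qed
  then show ?thesis unfolding theta_def by simp
qed

lemma Pmap_formula:
  assumes R: "tens_ok (Suc r) R" and X: "finite {\<kappa>. X \<kappa> \<noteq> 0}" "\<And>\<kappa>. X \<kappa> \<noteq> 0 \<Longrightarrow> length \<kappa> = r"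
  shows "Pmap sc d (Suc r) X R = (\<Sum>\<kappa>\<in>{\<kappa>. X \<kappa> \<noteq> 0}. sc (X \<kappa>) (Psi \<kappa> R))"
proof -
  obtain N where N: "normal (Suc r) N" and RN: "(\<lambda>\<beta>. R \<beta> - N \<beta>) \<in> relsp sc d (Suc r)"
    using exists_normal[OF R] by blast
  have th: "theta sc d (Suc r) R = (\<lambda>\<beta>. N (\<beta> @ [0]))" by (rule theta_eq[OF R N RN])
  have PsiRN: "Psi \<kappa> R = sc (psi \<kappa> (\<kappa>@[0])) (N (\<kappa>@[0]))" if l: "length \<kappa> = r" for \<kappa>
  proof -
    have "Psi \<kappa> (\<lambda>\<beta>. R \<beta> - N \<beta>) = 0" using Psi_relsp[OF RN] l by simp
    moreover have "fin R" "fin N" using R N by (auto simp: normal_def tens_ok_fin)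
    ultimately have "Psi \<kappa> R = Psi \<kappa> N" by (simp add: Psi_diff)
    then show ?thesis using Psi_normal[of \<kappa> N] N l by simp
  qed
  show ?thesis
    unfolding Pmap_def th Let_def
  proof (rule sum.cong[OF refl])
    fix \<kappa> assume "\<kappa> \<in> {\<kappa>. X \<kappa> \<noteq> 0}"
    then have l: "length \<kappa> = r" using X by auto
    have "(\<Sum>\<beta>\<in>{\<beta>. N (\<beta> @ [0]) \<noteq> 0}. sc (X \<kappa> * (\<Prod>i<Suc r - 1. hpair (antip (monom 1 (\<kappa> ! i))) (\<beta> ! i))) (N (\<beta> @ [0])))
       = (\<Sum>\<beta>\<in>{\<beta>. N (\<beta> @ [0]) \<noteq> 0}. if \<beta> = \<kappa> then sc (X \<kappa> * psi \<kappa> (\<kappa>@[0])) (N (\<kappa> @ [0])) else 0)"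
    proof (rule sum.cong[OF refl])
      fix \<beta> assume "\<beta> \<in> {\<beta>. N (\<beta> @ [0]) \<noteq> 0}"
      then have "length \<beta> = r" using N by (auto simp: normal_def tens_ok_def)
      then show "sc (X \<kappa> * (\<Prod>i<Suc r - 1. hpair (antip (monom 1 (\<kappa> ! i))) (\<beta> ! i))) (N (\<beta> @ [0])) =
          (if \<beta> = \<kappa> then sc (X \<kappa> * psi \<kappa> (\<kappa>@[0])) (N (\<kappa> @ [0])) else 0)"
        using l by (simp add: hp_prod[of \<beta> \<kappa>, unfolded l])
    qed
    also have "\<dots> = sc (X \<kappa>) (Psi \<kappa> R)"
    proof -
      have fB: "finite {\<beta>. N (\<beta> @ [0]) \<noteq> 0}"
        using N unfolding normal_def tens_ok_def
        by (intro finite_vimageI[where h="\<lambda>\<beta>. \<beta> @ [0]" and F="{\<alpha>. N \<alpha> \<noteq> 0}", unfolded vimage_def, simplified]) (auto simp: inj_on_def)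
      show ?thesis using fB by (simp add: sum.delta' PsiRN[OF l])
    qed
    finally show "(\<Sum>\<beta>\<in>{\<beta>. N (\<beta> @ [0]) \<noteq> 0}. sc (X \<kappa> * (\<Prod>i<Suc r - 1. hpair (antip (monom 1 (\<kappa> ! i))) (\<beta> ! i))) (N (\<beta> @ [0])))
       = sc (X \<kappa>) (Psi \<kappa> R)" .
  qed
qed

end


lemma tens_ok_sing: "length \<alpha> = n \<Longrightarrow> tens_ok n (sing \<alpha> c)"
  unfolding tens_ok_def sing_def by (auto intro: finite_subset[of _ "{\<alpha>}"])

lemma tens_ok_sum: "finite I \<Longrightarrow> (\<And>i. i \<in> I \<Longrightarrow> tens_ok n (F i :: nat list \<Rightarrow> 'a::comm_monoid_add)) \<Longrightarrow>
  tens_ok n (\<lambda>\<beta>. \<Sum>i\<in>I. F i \<beta>)"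
proof (induction I rule: finite_induct)
  case empty
  then show ?case by (simp add: tens_ok_def)
next
  case (insert x I)
  have a: "tens_ok n (F x)" "tens_ok n (\<lambda>\<beta>. \<Sum>i\<in>I. F i \<beta>)" using insert by auto
  have o: "F x \<beta> \<noteq> 0 \<or> (\<Sum>i\<in>I. F i \<beta>) \<noteq> 0" if "F x \<beta> + (\<Sum>i\<in>I. F i \<beta>) \<noteq> 0" for \<beta> using that by auto
  have "{\<beta>. F x \<beta> + (\<Sum>i\<in>I. F i \<beta>) \<noteq> 0} \<subseteq> {\<alpha>. F x \<alpha> \<noteq> 0} \<union> {\<alpha>. (\<Sum>i\<in>I. F i \<alpha>) \<noteq> 0}" using o by blast
  then have "tens_ok n (\<lambda>\<beta>. F x \<beta> + (\<Sum>i\<in>I. F i \<beta>))" using a o unfolding tens_ok_def by (meson finite_UnI finite_subset)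
  then show ?case using insert by simp
qed

lemma length_map2_plus: "length \<alpha> = length \<gamma> \<Longrightarrow> length (map2 (+) \<alpha> (\<gamma>::nat list)) = length \<alpha>"
  by simp

context conf
begin

definition prb :: "'c \<Rightarrow> 'c \<Rightarrow> nat" where "prb a b = (SOME N. \<forall>j\<ge>N. pr j a b = 0)"

lemma pr_bound: "j \<ge> prb a b \<Longrightarrow> pr j a b = 0"
proof -
  have "\<exists>N. \<forall>j\<ge>N. pr j a b = 0" using ca unfolding conformal_algebra_def by blast
  then have "\<forall>j\<ge>prb a b. pr j a b = 0" unfolding prb_def by (rule someI_ex)
  then show "j \<ge> prb a b \<Longrightarrow> pr j a b = 0" by blast
qed

definition EPn :: "nat list \<Rightarrow> 'c \<Rightarrow> nat list \<Rightarrow> 'c \<Rightarrow> nat list \<Rightarrow> 'c" where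
  "EPn \<alpha> a \<beta> b = (\<lambda>\<omega>. \<Sum>s<prb a b. \<Sum>\<gamma>\<in>{\<gamma>. (Delta_it (length \<alpha>) s \<gamma> :: 'k) \<noteq> 0}.
      sing (map2 (+) \<alpha> \<gamma> @ \<beta>) (sc (Delta_it (length \<alpha>) s \<gamma> * ((-1)^s / fact s)) (pr s a b)) \<omega>)"

lemma tens_ok_EPn: "tens_ok (length \<alpha> + length \<beta>) (EPn \<alpha> a \<beta> b)"
  unfolding EPn_def
proof (intro tens_ok_sum)
  fix s \<gamma> assume "\<gamma> \<in> {\<gamma>. (Delta_it (length \<alpha>) s \<gamma> :: 'k) \<noteq> 0}"
  then have "length \<gamma> = length \<alpha>" using Delta_supp by blast
  then show "tens_ok (length \<alpha> + length \<beta>) (sing (map2 (+) \<alpha> \<gamma> @ \<beta>) (sc (Delta_it (length \<alpha>) s \<gamma> * ((-1)^s / fact s)) (pr s a b)))"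
    by (intro tens_ok_sing) simp
qed auto

lemma pseudo_supp: "pseudo sc pr a b \<rho> \<noteq> 0 \<Longrightarrow> \<exists>s. \<rho> = [s, 0] \<and> s < prb a b"
proof -
  assume nz: "pseudo sc pr a b \<rho> \<noteq> 0"
  then obtain s q where r: "\<rho> = [s, q]"
    unfolding pseudo_def by (auto split: list.splits)
  then have q: "q = 0" using nz unfolding pseudo_def by (auto split: if_splits)
  have "pr s a b \<noteq> 0" using nz r q unfolding pseudo_def by auto
  then have "s < prb a b" using pr_bound not_le by blast
  then show ?thesis using r q by blast
qed

lemma pseudo_s0: "pseudo sc pr a b [s, 0] = sc ((-1)^s / fact s) (pr s a b)"
  unfolding pseudo_def by simp

lemma EP_term:
  assumes lb: "length \<beta> = Suc m'"
  shows "(let ab = pseudo sc pr a b in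
        \<Sum>\<rho>\<in>{\<rho>. ab \<rho> \<noteq> 0}.
        \<Sum>\<gamma>\<in>{\<gamma>. (Delta_it (length \<alpha>) (\<rho> ! 0) \<gamma> :: 'k) \<noteq> 0}.
        \<Sum>\<delta>\<in>{\<delta>. (Delta_it (Suc m') (\<rho> ! 1) \<delta> :: 'k) \<noteq> 0}.
          (if \<omega> = map2 (+) \<alpha> \<gamma> @ map2 (+) \<beta> \<delta>
           then sc (Delta_it (length \<alpha>) (\<rho> ! 0) \<gamma> * Delta_it (Suc m') (\<rho> ! 1) \<delta>) (ab \<rho>) else 0))
     = EPn \<alpha> a \<beta> b \<omega>"
proof -
  let ?ab = "pseudo sc pr a b"
  define F where "F = (\<lambda>\<rho>. \<Sum>\<gamma>\<in>{\<gamma>. (Delta_it (length \<alpha>) (\<rho> ! 0) \<gamma> :: 'k) \<noteq> 0}.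
        \<Sum>\<delta>\<in>{\<delta>. (Delta_it (Suc m') (\<rho> ! 1) \<delta> :: 'k) \<noteq> 0}.
          (if \<omega> = map2 (+) \<alpha> \<gamma> @ map2 (+) \<beta> \<delta>
           then sc (Delta_it (length \<alpha>) (\<rho> ! 0) \<gamma> * Delta_it (Suc m') (\<rho> ! 1) \<delta>) (?ab \<rho>) else 0))"
  have "(\<Sum>\<rho>\<in>{\<rho>. ?ab \<rho> \<noteq> 0}. F \<rho>) = (\<Sum>\<rho>\<in>(\<lambda>s. [s, 0]) ` {..<prb a b}. F \<rho>)"
  proof (rule sum.mono_neutral_left)
    show "{\<rho>. ?ab \<rho> \<noteq> 0} \<subseteq> (\<lambda>s. [s, 0]) ` {..<prb a b}" using pseudo_supp by blast
    show "\<forall>\<rho>\<in>(\<lambda>s. [s, 0]) ` {..<prb a b} - {\<rho>. ?ab \<rho> \<noteq> 0}. F \<rho> = 0"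
    proof
      fix \<rho> assume "\<rho> \<in> (\<lambda>s. [s, 0]) ` {..<prb a b} - {\<rho>. ?ab \<rho> \<noteq> 0}"
      then have "?ab \<rho> = 0" by simp
      then show "F \<rho> = 0" by (simp add: F_def cong: if_cong)
    qed
  qed auto
  also have "\<dots> = (\<Sum>s<prb a b. F [s, 0])"
    by (rule sum.reindex[unfolded comp_def]) (auto simp: inj_on_def)
  also have "\<dots> = EPn \<alpha> a \<beta> b \<omega>"
    unfolding EPn_def
  proof (rule sum.cong[OF refl])
    fix s
    have D0: "{\<delta>. (Delta_it (Suc m') 0 \<delta> :: 'k) \<noteq> 0} = {replicate (Suc m') 0}"
      by (auto simp: Delta_0 simp del: replicate_Suc)
    have n: "[s, 0::nat] ! 0 = s" "[s, 0::nat] ! 1 = 0" by simp_all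
    show "F [s, 0] = (\<Sum>\<gamma>\<in>{\<gamma>. (Delta_it (length \<alpha>) s \<gamma> :: 'k) \<noteq> 0}.
      sing (map2 (+) \<alpha> \<gamma> @ \<beta>) (sc (Delta_it (length \<alpha>) s \<gamma> * ((-1)^s / fact s)) (pr s a b)) \<omega>)"
      unfolding F_def n D0 using lb
      by (simp add: map2_plus_rep Delta_0 pseudo_s0 sing_def del: replicate_Suc cong: if_cong)
  qed
  finally show ?thesis unfolding F_def Let_def by simp
qed

lemma EP_repr:
  assumes A: "tens_ok (Suc s') A" and B: "tens_ok (Suc m') B"
  shows "EP sc pr (Suc s') (Suc m') A B = (\<lambda>\<omega>. \<Sum>\<alpha>\<in>{\<alpha>. A \<alpha> \<noteq> 0}. \<Sum>\<beta>\<in>{\<beta>. B \<beta> \<noteq> 0}. EPn \<alpha> (A \<alpha>) \<beta> (B \<beta>) \<omega>)"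
proof
  fix \<omega>
  show "EP sc pr (Suc s') (Suc m') A B \<omega> = (\<Sum>\<alpha>\<in>{\<alpha>. A \<alpha> \<noteq> 0}. \<Sum>\<beta>\<in>{\<beta>. B \<beta> \<noteq> 0}. EPn \<alpha> (A \<alpha>) \<beta> (B \<beta>) \<omega>)"
    unfolding EP_def
  proof (rule sum.cong[OF refl], rule sum.cong[OF refl])
    fix \<alpha> \<beta> assume a: "\<alpha> \<in> {\<alpha>. A \<alpha> \<noteq> 0}" and b: "\<beta> \<in> {\<beta>. B \<beta> \<noteq> 0}"
    have la: "length \<alpha> = Suc s'" using a A by (auto simp: tens_ok_def)
    have lb: "length \<beta> = Suc m'" using b B by (auto simp: tens_ok_def)
    show "(let ab = pseudo sc pr (A \<alpha>) (B \<beta>) in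
        \<Sum>\<rho>\<in>{\<rho>. ab \<rho> \<noteq> 0}.
        \<Sum>\<gamma>\<in>{\<gamma>. (Delta_it (Suc s') (\<rho> ! 0) \<gamma> :: 'k) \<noteq> 0}.
        \<Sum>\<delta>\<in>{\<delta>. (Delta_it (Suc m') (\<rho> ! 1) \<delta> :: 'k) \<noteq> 0}.
          (if \<omega> = map2 (+) \<alpha> \<gamma> @ map2 (+) \<beta> \<delta>
           then sc (Delta_it (Suc s') (\<rho> ! 0) \<gamma> * Delta_it (Suc m') (\<rho> ! 1) \<delta>) (ab \<rho>) else 0))
       = EPn \<alpha> (A \<alpha>) \<beta> (B \<beta>) \<omega>"
      using EP_term[OF lb, where a="A \<alpha>" and b="B \<beta>" and \<alpha>=\<alpha> and \<omega>=\<omega>] la by (simp cong: if_cong)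
  qed
qed

lemma tens_ok_EP:
  assumes A: "tens_ok (Suc s') A" and B: "tens_ok (Suc m') B"
  shows "tens_ok (Suc s' + Suc m') (EP sc pr (Suc s') (Suc m') A B)"
  unfolding EP_repr[OF A B]
proof (intro tens_ok_sum)
  fix \<alpha> \<beta> assume a: "\<alpha> \<in> {\<alpha>. A \<alpha> \<noteq> 0}" and b: "\<beta> \<in> {\<beta>. B \<beta> \<noteq> 0}"
  have la: "length \<alpha> = Suc s'" using a A by (auto simp: tens_ok_def)
  have lb: "length \<beta> = Suc m'" using b B by (auto simp: tens_ok_def)
  show "tens_ok (Suc s' + Suc m') (EPn \<alpha> (A \<alpha>) \<beta> (B \<beta>))" using tens_ok_EPn[of \<alpha> \<beta>] la lb by simp
qed (use A B in \<open>auto simp: tens_ok_def\<close>)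

lemma normal_pseudo: "normal 2 (pseudo sc pr a b)"
proof -
  have "{\<rho>. pseudo sc pr a b \<rho> \<noteq> 0} \<subseteq> (\<lambda>s. [s, 0]) ` {..<prb a b}" using pseudo_supp by blast
  then have "finite {\<rho>. pseudo sc pr a b \<rho> \<noteq> 0}" by (rule finite_subset) auto
  then show ?thesis unfolding normal_def tens_ok_def using pseudo_supp by fastforce
qed

lemma Psi_pseudo: "Psi [K] (pseudo sc pr a b) = pr K a b"
proof -
  have "Psi [K] (pseudo sc pr a b) = sc (psi [K] [K, 0]) (pseudo sc pr a b [K, 0])"
    using Psi_normal[of "[K]" "pseudo sc pr a b"] normal_pseudo by (simp add: numeral_2_eq_2)
  also have "\<dots> = pr K a b"
    by (simp add: pseudo_s0 psi_diag[of "[K]", simplified] ff_self)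
  finally show ?thesis .
qed

lemma Pmap_pseudo: "Pmap sc d 2 (poly1 w) (pseudo sc pr a b) = (\<Sum>K\<in>{K. coeff w K \<noteq> 0}. sc (coeff w K) (pr K a b))"
proof -
  have S: "{\<kappa>. poly1 w \<kappa> \<noteq> 0} = (\<lambda>K. [K]) ` {K. coeff w K \<noteq> 0}"
  proof (rule set_eqI)
    fix \<kappa> :: "nat list"
    show "\<kappa> \<in> {\<kappa>. poly1 w \<kappa> \<noteq> 0} \<longleftrightarrow> \<kappa> \<in> (\<lambda>K. [K]) ` {K. coeff w K \<noteq> 0}"
      by (cases \<kappa> rule: remdups_adj.cases) (auto simp: poly1_def)
  qed
  have fin: "finite {K. coeff w K \<noteq> 0}"
    by (rule finite_subset[of _ "{..degree w}"]) (auto intro: le_degree)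
  have "Pmap sc d (Suc 1) (poly1 w) (pseudo sc pr a b) = (\<Sum>\<kappa>\<in>{\<kappa>. poly1 w \<kappa> \<noteq> 0}. sc (poly1 w \<kappa>) (Psi \<kappa> (pseudo sc pr a b)))"
  proof (rule Pmap_formula)
    show "tens_ok (Suc 1) (pseudo sc pr a b)" using normal_pseudo by (simp add: normal_def numeral_2_eq_2)
    show "finite {\<kappa>. poly1 w \<kappa> \<noteq> 0}" unfolding S using fin by simp
    show "\<And>\<kappa>. poly1 w \<kappa> \<noteq> 0 \<Longrightarrow> length \<kappa> = 1" unfolding poly1_def by (auto split: list.splits)
  qed
  also have "\<dots> = (\<Sum>K\<in>{K. coeff w K \<noteq> 0}. sc (coeff w K) (pr K a b))"
    unfolding S by (subst sum.reindex) (auto simp: inj_on_def poly1_def Psi_pseudo)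
  finally show ?thesis by (simp add: numeral_2_eq_2)
qed

lemma Pmap_sing:
  assumes A: "tens_ok (Suc r) A" and l: "length w = r"
  shows "Pmap sc d (Suc r) (sing w 1) A = Psi w A"
proof -
  have S: "{\<kappa>. sing w (1::'k) \<kappa> \<noteq> 0} = {w}" by (auto simp: sing_def)
  have "Pmap sc d (Suc r) (sing w 1) A = (\<Sum>\<kappa>\<in>{\<kappa>. sing w (1::'k) \<kappa> \<noteq> 0}. sc (sing w 1 \<kappa>) (Psi \<kappa> A))"
    by (rule Pmap_formula[OF A]) (auto simp: S l sing_def split: if_splits)
  then show ?thesis unfolding S by (simp add: sing_def)
qed

end


lemma coeff_y_monom: "coeff ((y::'a::comm_ring_1 poly) * monom 1 J) K = (if J \<le> K then coeff y (K - J) else 0)"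
  by (simp add: mult.commute[of y] coeff_monom_mult)

lemma fin_coeff: "finite {K. coeff (w::'a::zero poly) K \<noteq> 0}"
  by (rule finite_subset[of _ "{..degree w}"]) (auto intro: le_degree)

context conf
begin

lemma sum_coeff_shift:
  "(\<Sum>K\<in>{K. coeff (y * monom 1 J) K \<noteq> 0}. sc (coeff (y * monom 1 J) K) (F K)) =
   (\<Sum>k\<in>{k. coeff y k \<noteq> 0}. sc (coeff y k) (F (k + J)))"
proof -
  have S: "{K. coeff (y * monom 1 J) K \<noteq> 0} = (\<lambda>k. k + J) ` {k. coeff y k \<noteq> 0}"
  proof (rule set_eqI, rule iffI)
    fix K assume "K \<in> {K. coeff (y * monom 1 J) K \<noteq> 0}"
    then have "J \<le> K" "coeff y (K - J) \<noteq> 0" by (auto simp: coeff_y_monom split: if_splits)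
    then show "K \<in> (\<lambda>k. k + J) ` {k. coeff y k \<noteq> 0}" by (auto intro!: image_eqI[where x="K - J"])
  qed (auto simp: coeff_y_monom)
  show ?thesis unfolding S by (subst sum.reindex) (auto simp: inj_on_def coeff_y_monom)
qed

lemma finite_Jset: "finite {j. list_all2 (\<le>) j (\<kappa>::nat list)}"
proof (rule finite_subset)
  show "{j. list_all2 (\<le>) j \<kappa>} \<subseteq> {j. set j \<subseteq> {..sum_list \<kappa>} \<and> length j = length \<kappa>}"
  proof
    fix j assume "j \<in> {j. list_all2 (\<le>) j \<kappa>}"
    then have l: "length j = length \<kappa>" and le: "\<And>i. i < length j \<Longrightarrow> j!i \<le> \<kappa>!i"
      by (auto simp: list_all2_conv_all_nth)
    have "x \<le> sum_list \<kappa>" if "x \<in> set j" for x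
    proof -
      obtain i where "i < length j" "x = j!i" using \<open>x \<in> set j\<close> by (auto simp: in_set_conv_nth)
      then show ?thesis using le l elem_le_sum_list[of i \<kappa>] by fastforce
    qed
    then show "j \<in> {j. set j \<subseteq> {..sum_list \<kappa>} \<and> length j = length \<kappa>}" using l by auto
  qed
qed (rule finite_lists_length_eq, simp)

end


lemma ff_vandermonde: "ff (a + b) s = (\<Sum>j\<le>s. (s choose j) * ff a j * ff b (s - j))"
proof -
  have "(\<Sum>j\<le>s. (s choose j) * ff a j * ff b (s - j)) = (\<Sum>j\<le>s. fact s * ((a choose j) * (b choose (s - j))))"
  proof (rule sum.cong[OF refl])
    fix j assume "j \<in> {..s}"
    then have f: "fact j * fact (s - j) * (s choose j) = (fact s :: nat)" using binomial_fact_lemma by simp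
    have "(s choose j) * ff a j * ff b (s - j) = (fact j * fact (s - j) * (s choose j)) * ((a choose j) * (b choose (s - j)))"
      by (simp add: ff_binom mult_ac)
    then show "(s choose j) * ff a j * ff b (s - j) = fact s * ((a choose j) * (b choose (s - j)))"
      by (simp only: f)
  qed
  also have "\<dots> = fact s * ((a + b) choose s)" by (simp add: sum_distrib_left[symmetric] vandermonde)
  finally show ?thesis by (simp add: ff_binom)
qed

lemma Lset_Suc: "Lset (Suc n) M = (\<lambda>(j, g). j # g) ` ({..M} \<times> Lset n M)"
proof (rule set_eqI, rule iffI)
  fix x assume "x \<in> Lset (Suc n) M"
  then obtain j g where "x = j # g" "j \<le> M" "g \<in> Lset n M" by (auto simp: Lset_def length_Suc_conv)
  then show "x \<in> (\<lambda>(j, g). j # g) ` ({..M} \<times> Lset n M)" by force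
qed (auto simp: Lset_def)

lemma Delta_vdm:
  "length N = Suc t \<Longrightarrow> s \<le> M \<Longrightarrow>
   (\<Sum>\<gamma>\<in>Lset (Suc t) M. (Delta_it (Suc t) s \<gamma> :: 'k::field_char_0) * of_nat (\<Prod>i<Suc t. ff (N!i) (\<gamma>!i)))
     = of_nat (ff (sum_list N) s)"
proof (induction t arbitrary: N s)
  case 0
  then obtain n0 where N: "N = [n0]" by (cases N) auto
  have mem: "[s] \<in> Lset (Suc 0) M" using 0 by (simp add: Lset_def)
  have "(\<Sum>\<gamma>\<in>Lset (Suc 0) M. (Delta_it (Suc 0) s \<gamma> :: 'k) * of_nat (\<Prod>i<Suc 0. ff (N!i) (\<gamma>!i)))
      = (\<Sum>\<gamma>\<in>Lset (Suc 0) M. if \<gamma> = [s] then of_nat (ff n0 s) else 0)"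
    by (intro sum.cong refl) (simp add: N)
  also have "\<dots> = of_nat (ff n0 s)" using mem by (simp add: sum.delta')
  finally show ?case by (simp add: N)
next
  case (Suc t)
  then obtain n0 N' where N: "N = n0 # N'" and lN: "length N' = Suc t" by (cases N) auto
  let ?f = "\<lambda>\<gamma>. (Delta_it (Suc (Suc t)) s \<gamma> :: 'k) * of_nat (\<Prod>i<Suc (Suc t). ff (N!i) (\<gamma>!i))"
  have "(\<Sum>\<gamma>\<in>Lset (Suc (Suc t)) M. ?f \<gamma>) = (\<Sum>(j, g)\<in>{..M} \<times> Lset (Suc t) M. ?f (j # g))"
    unfolding Lset_Suc[of "Suc t"] by (subst sum.reindex) (auto simp: inj_on_def case_prod_beta)
  also have "\<dots> = (\<Sum>j\<le>M. \<Sum>g\<in>Lset (Suc t) M. ?f (j # g))" by (rule sum.cartesian_product[symmetric])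
  also have "\<dots> = (\<Sum>j\<le>M. if j \<le> s then of_nat ((s choose j) * ff n0 j * ff (sum_list N') (s - j)) else 0)"
  proof (rule sum.cong[OF refl])
    fix j assume j: "j \<in> {..M}"
    show "(\<Sum>g\<in>Lset (Suc t) M. ?f (j # g)) = (if j \<le> s then of_nat ((s choose j) * ff n0 j * ff (sum_list N') (s - j)) else 0)"
    proof (cases "j \<le> s")
      case True
      have IH': "(\<Sum>g\<in>Lset (Suc t) M. (Delta_it (Suc t) (s - j) g :: 'k) * of_nat (\<Prod>i<Suc t. ff (N'!i) (g!i)))
          = of_nat (ff (sum_list N') (s - j))"
        by (rule Suc.IH[OF lN]) (use Suc.prems(2) in simp)
      have "(\<Sum>g\<in>Lset (Suc t) M. ?f (j # g)) = (\<Sum>g\<in>Lset (Suc t) M. of_nat (s choose j) * of_nat (ff n0 j) *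
           ((Delta_it (Suc t) (s - j) g :: 'k) * of_nat (\<Prod>i<Suc t. ff (N'!i) (g!i))))"
        using True by (intro sum.cong refl) (simp add: N prod.lessThan_Suc_shift[of _ "Suc t"] del: prod.lessThan_Suc of_nat_prod)
      also have "\<dots> = of_nat (s choose j) * of_nat (ff n0 j) * of_nat (ff (sum_list N') (s - j))"
        unfolding sum_distrib_left[symmetric] IH' ..
      finally show ?thesis using True by simp
    qed simp
  qed
  also have "\<dots> = (\<Sum>j\<le>s. of_nat ((s choose j) * ff n0 j * ff (sum_list N') (s - j)))"
    using Suc.prems(2) by (intro sum.mono_neutral_cong_right) auto
  also have "\<dots> = of_nat (ff (sum_list N) s)"
    by (simp add: N ff_vandermonde del: of_nat_mult)
  finally show ?case .
qed

lemma Delta_vdm_supp: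
  "length N = Suc t \<Longrightarrow>
   (\<Sum>\<gamma>\<in>{\<gamma>. (Delta_it (Suc t) s \<gamma> :: 'k::field_char_0) \<noteq> 0}. (Delta_it (Suc t) s \<gamma> :: 'k) * of_nat (\<Prod>i<Suc t. ff (N!i) (\<gamma>!i)))
     = of_nat (ff (sum_list N) s)"
proof -
  assume l: "length N = Suc t"
  have "(\<Sum>\<gamma>\<in>{\<gamma>. (Delta_it (Suc t) s \<gamma> :: 'k) \<noteq> 0}. Delta_it (Suc t) s \<gamma> * of_nat (\<Prod>i<Suc t. ff (N!i) (\<gamma>!i)))
    = (\<Sum>\<gamma>\<in>Lset (Suc t) s. (Delta_it (Suc t) s \<gamma> :: 'k) * of_nat (\<Prod>i<Suc t. ff (N!i) (\<gamma>!i)))"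
    by (rule sum.mono_neutral_left) (auto simp: Delta_supp_sub)
  also have "\<dots> = of_nat (ff (sum_list N) s)" by (rule Delta_vdm[OF l order.refl])
  finally show ?thesis .
qed

lemma Delta_vdm_off:
  assumes lK: "length K = Suc t" and la: "length \<alpha> = Suc t"
  shows "(\<Sum>\<gamma>\<in>{\<gamma>. (Delta_it (Suc t) s \<gamma> :: 'k::field_char_0) \<noteq> 0}.
            (Delta_it (Suc t) s \<gamma> :: 'k) * of_nat (\<Prod>i<Suc t. ff (K!i) (\<alpha>!i + \<gamma>!i)))
     = of_nat (\<Prod>i<Suc t. ff (K!i) (\<alpha>!i)) * of_nat (ff (sum_list K - sum_list \<alpha>) s)"
proof -
  let ?N = "map2 (-) K \<alpha>"
  let ?P = "\<Prod>i<Suc t. ff (K!i) (\<alpha>!i)"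
  have lN: "length ?N = Suc t" using lK la by simp
  have "(\<Sum>\<gamma>\<in>{\<gamma>. (Delta_it (Suc t) s \<gamma> :: 'k) \<noteq> 0}. (Delta_it (Suc t) s \<gamma> :: 'k) * of_nat (\<Prod>i<Suc t. ff (K!i) (\<alpha>!i + \<gamma>!i)))
     = (\<Sum>\<gamma>\<in>{\<gamma>. (Delta_it (Suc t) s \<gamma> :: 'k) \<noteq> 0}. of_nat ?P * ((Delta_it (Suc t) s \<gamma> :: 'k) * of_nat (\<Prod>i<Suc t. ff (?N!i) (\<gamma>!i))))"
    by (intro sum.cong refl) (simp add: ff_add prod.distrib lK la del: of_nat_prod)
  also have "\<dots> = of_nat ?P * of_nat (ff (sum_list ?N) s)"
    unfolding sum_distrib_left[symmetric] Delta_vdm_supp[OF lN] ..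
  also have "\<dots> = of_nat ?P * of_nat (ff (sum_list K - sum_list \<alpha>) s)"
  proof (cases "?P = 0")
    case False
    have "sum_list ?N = (\<Sum>j<length K. K!j - \<alpha>!j)" using lK la by (simp add: sum_list_lt)
    also have "\<dots> = sum_list K - sum_list \<alpha>" using sum_diff_list[of K \<alpha>] False lK la by simp
    finally show ?thesis by simp
  qed simp
  finally show ?thesis .
qed

lemma choose_ff: "(N choose j) * ff (N - j) a = ff N a * ((N - a) choose j)"
proof (cases "j + a \<le> N")
  case True
  have c1: "(N choose (j + a)) * ((j + a) choose j) = (N choose j) * ((N - j) choose a)"
    using choose_mult[of j "j + a" N] True by simp
  have c2: "(N choose (j + a)) * ((j + a) choose a) = (N choose a) * ((N - a) choose j)"
    using choose_mult[of a "j + a" N] True by simp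
  have c3: "((j + a) choose j) = ((j + a) choose a)" using binomial_symmetric[of j "j + a"] by simp
  have "(N choose j) * ((N - j) choose a) = (N choose a) * ((N - a) choose j)" using c1 c2 c3 by simp
  then show ?thesis by (simp add: ff_binom mult_ac)
next
  case False
  have l: "(N choose j) * ff (N - j) a = 0"
  proof (cases "j \<le> N")
    case True
    then have "N - j < a" using False by simp
    then show ?thesis by (simp add: ff_zero)
  qed simp
  have r: "ff N a * ((N - a) choose j) = 0"
  proof (cases "a \<le> N")
    case True
    then have "N - a < j" using False by simp
    then show ?thesis by simp
  qed (simp add: ff_zero)
  show ?thesis by (simp only: l r)
qed

definition Jset :: "nat list \<Rightarrow> nat list set" where "Jset M = {j. list_all2 (\<le>) j M}"

lemma Jset_Nil: "Jset [] = {[]}" by (auto simp: Jset_def)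

lemma Jset_Cons: "Jset (m # M) = (\<lambda>(j0, j'). j0 # j') ` ({..m} \<times> Jset M)"
  by (auto simp: Jset_def list_all2_Cons2)

lemma finite_Jset': "finite (Jset M)"
  by (induction M) (auto simp: Jset_Nil Jset_Cons)

lemma Jset_len: "j \<in> Jset M \<Longrightarrow> length j = length M"
  by (auto simp: Jset_def list_all2_lengthD)

lemma Jset_sum: "j \<in> Jset M \<Longrightarrow> sum_list j \<le> sum_list M"
proof (induction M arbitrary: j)
  case Nil
  then show ?case by (simp add: Jset_Nil)
next
  case (Cons m M)
  then obtain j0 j' where "j = j0 # j'" "j0 \<le> m" "j' \<in> Jset M" by (auto simp: Jset_Cons)
  then show ?case using Cons.IH by fastforce
qed

lemma coeff_11_pow: "coeff ([:1, 1:] ^ n :: 'k::comm_semiring_1 poly) J = of_nat (n choose J)"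
proof (induction n arbitrary: J)
  case 0
  then show ?case by (cases J) (simp_all add: coeff_1)
next
  case (Suc n)
  have "([:1, 1:] ^ Suc n :: 'k poly) = [:1, 1:] ^ n + pCons 0 ([:1, 1:] ^ n)"
    by (simp add: algebra_simps)
  then show ?case using Suc by (cases J) (simp_all add: coeff_pCons add.commute)
qed

lemma Q_eq:
  "length N = length M \<Longrightarrow> (\<forall>i<length M. N!i \<le> M!i) \<Longrightarrow>
   (\<Sum>j\<in>Jset M. smult (of_nat (\<Prod>i<length M. N!i choose j!i)) (monom 1 (sum_list j)))
     = ([:1, 1:] ^ sum_list N :: 'k::comm_semiring_1 poly)"
proof (induction M arbitrary: N)
  case Nil
  then show ?case by (simp add: Jset_Nil monom_0)
next
  case (Cons m M)
  then obtain n0 N' where N: "N = n0 # N'" and lN: "length N' = length M" by (cases N) auto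
  have n0m: "n0 \<le> m" using Cons.prems(2) N by auto
  have le': "\<forall>i<length M. N'!i \<le> M!i" using Cons.prems(2) N by auto
  have one: "(\<Sum>j0\<le>m. smult (of_nat (n0 choose j0)) (monom 1 j0)) = ([:1, 1:] ^ n0 :: 'k poly)"
  proof (rule poly_eqI)
    fix J
    have "coeff (\<Sum>j0\<le>m. smult (of_nat (n0 choose j0)) (monom (1::'k) j0)) J = (\<Sum>j0\<le>m. if J = j0 then of_nat (n0 choose j0) else 0)"
      unfolding coeff_sum by (intro sum.cong refl) (simp add: coeff_monom)
    also have "\<dots> = of_nat (n0 choose J)"
      using n0m by (subst sum.delta') (auto simp: binomial_eq_0)
    finally show "coeff (\<Sum>j0\<le>m. smult (of_nat (n0 choose j0)) (monom (1::'k) j0)) J = coeff ([:1, 1:] ^ n0) J"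
      by (simp add: coeff_11_pow)
  qed
  have "(\<Sum>j\<in>Jset (m # M). smult (of_nat (\<Prod>i<length (m # M). N!i choose j!i)) (monom (1::'k) (sum_list j)))
     = (\<Sum>(j0, j')\<in>{..m} \<times> Jset M. smult (of_nat (\<Prod>i<Suc (length M). N!i choose (j0 # j')!i)) (monom (1::'k) (sum_list (j0 # j'))))"
    unfolding Jset_Cons by (subst sum.reindex) (auto simp: inj_on_def case_prod_beta)
  also have "\<dots> = (\<Sum>j0\<le>m. \<Sum>j'\<in>Jset M. smult (of_nat (n0 choose j0)) (monom (1::'k) j0) *
        smult (of_nat (\<Prod>i<length M. N'!i choose j'!i)) (monom 1 (sum_list j')))"
    unfolding sum.cartesian_product[symmetric]
    by (intro sum.cong refl) (simp add: N prod.lessThan_Suc_shift mult_monom mult.commute del: prod.lessThan_Suc)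
  also have "\<dots> = (\<Sum>j0\<le>m. smult (of_nat (n0 choose j0)) (monom (1::'k) j0)) *
      (\<Sum>j'\<in>Jset M. smult (of_nat (\<Prod>i<length M. N'!i choose j'!i)) (monom 1 (sum_list j')))"
    by (simp add: sum_product)
  also have "\<dots> = [:1, 1:] ^ n0 * [:1, 1:] ^ sum_list N'" unfolding one Cons.IH[OF lN le'] ..
  also have "\<dots> = [:1, 1:] ^ sum_list N" by (simp add: N power_add)
  finally show ?case .
qed

lemma multi_binom:
  assumes l: "length N = length M" and le: "\<forall>i<length M. N!i \<le> M!i"
  shows "(\<Sum>j\<in>Jset M. of_nat (\<Prod>i<length M. N!i choose j!i) * G (sum_list j))
     = (\<Sum>J\<le>sum_list N. of_nat (sum_list N choose J) * (G J :: 'k::field_char_0))"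
proof -
  let ?R = "sum_list M"
  define \<Phi> where "\<Phi> = (\<lambda>p::'k poly. \<Sum>J\<le>?R. coeff p J * G J)"
  let ?c = "\<lambda>j. (of_nat (\<Prod>i<length M. N!i choose j!i) :: 'k)"
  have "\<Phi> (\<Sum>j\<in>Jset M. smult (?c j) (monom 1 (sum_list j))) = (\<Sum>J\<le>?R. \<Sum>j\<in>Jset M. (if sum_list j = J then ?c j * G J else 0))"
  proof -
    have cf: "coeff (\<Sum>j\<in>Jset M. smult (?c j) (monom 1 (sum_list j))) J = (\<Sum>j\<in>Jset M. if sum_list j = J then ?c j else 0)" for J
      unfolding coeff_sum by (intro sum.cong refl) (simp add: coeff_monom)
    show ?thesis unfolding \<Phi>_def cf sum_distrib_right
      by (intro sum.cong refl) simp
  qed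
  also have "\<dots> = (\<Sum>j\<in>Jset M. \<Sum>J\<le>?R. (if sum_list j = J then ?c j * G J else 0))" by (rule sum.swap)
  also have "\<dots> = (\<Sum>j\<in>Jset M. ?c j * G (sum_list j))"
    using Jset_sum by (intro sum.cong refl) (simp add: sum.delta')
  finally have lhs: "\<Phi> (\<Sum>j\<in>Jset M. smult (?c j) (monom 1 (sum_list j))) = (\<Sum>j\<in>Jset M. ?c j * G (sum_list j))" .
  have NR: "sum_list N \<le> ?R" using l le by (simp add: sum_list_lt) (intro sum_mono, simp)
  have "\<Phi> ([:1, 1:] ^ sum_list N) = (\<Sum>J\<le>?R. of_nat (sum_list N choose J) * G J)"
    unfolding \<Phi>_def by (simp add: coeff_11_pow)
  also have "\<dots> = (\<Sum>J\<le>sum_list N. of_nat (sum_list N choose J) * G J)"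
    using NR by (intro sum.mono_neutral_right) auto
  finally have rhs: "\<Phi> ([:1, 1:] ^ sum_list N) = (\<Sum>J\<le>sum_list N. of_nat (sum_list N choose J) * G J)" .
  have "(\<Sum>j\<in>Jset M. ?c j * G (sum_list j)) = \<Phi> (\<Sum>j\<in>Jset M. smult (?c j) (monom 1 (sum_list j)))"
    using lhs by simp
  also have "\<dots> = \<Phi> ([:1, 1:] ^ sum_list N)" by (simp only: Q_eq[OF l le])
  also have "\<dots> = (\<Sum>J\<le>sum_list N. of_nat (sum_list N choose J) * G J)" by (rule rhs)
  finally show ?thesis .
qed

lemma pascal_sum:
  "(\<Sum>i\<le>Suc L. of_nat (Suc L choose i) * t i) =
   (\<Sum>i\<le>L. of_nat (L choose i) * t i) + (\<Sum>i\<le>L. of_nat (L choose i) * (t (Suc i) :: 'a::comm_semiring_1))"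
proof -
  have "(\<Sum>i\<le>Suc L. of_nat (Suc L choose i) * t i) = t 0 + (\<Sum>i\<le>L. of_nat (Suc L choose Suc i) * t (Suc i))"
    by (subst sum.atMost_Suc_shift) simp
  also have "\<dots> = t 0 + (\<Sum>i\<le>L. of_nat (L choose Suc i) * t (Suc i)) + (\<Sum>i\<le>L. of_nat (L choose i) * t (Suc i))"
    by (simp add: sum.distrib algebra_simps)
  also have "t 0 + (\<Sum>i\<le>L. of_nat (L choose Suc i) * t (Suc i)) = (\<Sum>i\<le>Suc L. of_nat (L choose i) * t i)"
    by (subst sum.atMost_Suc_shift) simp
  also have "\<dots> = (\<Sum>i\<le>L. of_nat (L choose i) * t i)" by (simp add: binomial_eq_0)
  finally show ?thesis .
qed

lemma bracket:
  "(\<Sum>i\<le>L. of_nat (L choose i) * (of_nat (ff p i) * (-1)^(p - i) * of_nat (ff (k + L - i) (p - i))))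
     = ((-1)^p * of_nat (ff k p) :: 'k::field_char_0)"
proof (induction L arbitrary: p k)
  case 0
  then show ?case by simp
next
  case (Suc L)
  let ?t = "\<lambda>i. (of_nat (ff p i) * (-1)^(p - i) * of_nat (ff (k + Suc L - i) (p - i)) :: 'k)"
  have A: "(\<Sum>i\<le>L. of_nat (L choose i) * ?t i) = (-1)^p * of_nat (ff (Suc k) p)"
  proof -
    have "(\<Sum>i\<le>L. of_nat (L choose i) * ?t i) =
        (\<Sum>i\<le>L. of_nat (L choose i) * (of_nat (ff p i) * (-1)^(p - i) * of_nat (ff (Suc k + L - i) (p - i))))"
      by (intro sum.cong refl) (simp add: Suc_diff_le)
    then show ?thesis using Suc.IH[of p "Suc k"] by simp
  qed
  have B: "(\<Sum>i\<le>L. of_nat (L choose i) * ?t (Suc i)) = (if p = 0 then 0 else of_nat p * ((-1)^(p - 1) * of_nat (ff k (p - 1))))"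
  proof (cases p)
    case 0
    then show ?thesis by (simp add: ff_zero)
  next
    case (Suc p')
    have "(\<Sum>i\<le>L. of_nat (L choose i) * ?t (Suc i)) =
        (\<Sum>i\<le>L. of_nat p * (of_nat (L choose i) * (of_nat (ff p' i) * (-1)^(p' - i) * of_nat (ff (k + L - i) (p' - i)))))"
      by (intro sum.cong refl) (simp add: Suc ff_Suc_Suc algebra_simps)
    also have "\<dots> = of_nat p * ((-1)^p' * of_nat (ff k p'))"
      by (simp add: sum_distrib_left[symmetric] Suc.IH)
    finally show ?thesis using Suc by simp
  qed
  have "(\<Sum>i\<le>Suc L. of_nat (Suc L choose i) * ?t i) = (\<Sum>i\<le>L. of_nat (L choose i) * ?t i) + (\<Sum>i\<le>L. of_nat (L choose i) * ?t (Suc i))"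
    by (rule pascal_sum)
  also have "\<dots> = (-1)^p * of_nat (ff (Suc k) p) + (if p = 0 then 0 else of_nat p * ((-1)^(p - 1) * of_nat (ff k (p - 1))))"
    by (simp only: A B)
  also have "\<dots> = (-1)^p * of_nat (ff k p)"
  proof (cases p)
    case 0
    then show ?thesis by simp
  next
    case (Suc p')
    have pas: "(of_nat (ff (Suc k) (Suc p')) :: 'k) = of_nat (ff k (Suc p')) + of_nat (Suc p') * of_nat (ff k p')"
      by (metis ff_pascal of_nat_add of_nat_mult)
    show ?thesis using Suc by (simp add: pas algebra_simps)
  qed
  finally show ?case .
qed


lemma prod_lessThan_add: "(\<Prod>i<(a::nat) + b. f i) = (\<Prod>i<a. f i) * (\<Prod>i<b. f (a + i))"
  by (induction b) (simp_all add: mult_ac)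

lemma psi_split:
  fixes \<kappa>1 \<kappa>2 a\<alpha> b\<beta> \<gamma> :: "nat list"
  assumes l1: "length \<kappa>1 = s'" and l2: "length \<kappa>2 = m'" and la: "length a\<alpha> = s'" and lb: "length b\<beta> = m'"
    and lg: "length \<gamma> = Suc s'"
  shows "psi (\<kappa>1 @ k # \<kappa>2) (map2 (+) (a\<alpha> @ [p]) \<gamma> @ b\<beta> @ [q]) =
    (-1) ^ (sum_list a\<alpha> + p + sum_list \<gamma> + sum_list b\<beta>) *
    of_nat (\<Prod>i<Suc s'. ff ((\<kappa>1 @ [k]) ! i) ((a\<alpha> @ [p]) ! i + \<gamma> ! i)) *
    of_nat (\<Prod>i<m'. ff (\<kappa>2 ! i) (b\<beta> ! i)) *
    (of_nat (ff q (sum_list \<kappa>1 + k + sum_list \<kappa>2 - (sum_list a\<alpha> + p + sum_list \<gamma> + sum_list b\<beta>))) :: 'k::field_char_0)"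
proof -
  let ?g = "map2 (+) (a\<alpha> @ [p]) \<gamma>"
  have lg': "length ?g = Suc s'" using la lg by simp
  have bl: "butlast (?g @ b\<beta> @ [q]) = ?g @ b\<beta>" by (simp add: butlast_append)
  have lst: "last (?g @ b\<beta> @ [q]) = q" by simp
  have sg: "sum_list ?g = sum_list a\<alpha> + p + sum_list \<gamma>" using la lg by (simp add: sum_list_map2_plus)
  have lk: "length (\<kappa>1 @ k # \<kappa>2) = Suc s' + m'" using l1 l2 by simp
  have "(\<Prod>i<length (\<kappa>1 @ k # \<kappa>2). ff ((\<kappa>1 @ k # \<kappa>2) ! i) ((?g @ b\<beta> @ [q]) ! i)) =
        (\<Prod>i<Suc s'. ff ((\<kappa>1 @ k # \<kappa>2) ! i) ((?g @ b\<beta> @ [q]) ! i)) *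
        (\<Prod>i<m'. ff ((\<kappa>1 @ k # \<kappa>2) ! (Suc s' + i)) ((?g @ b\<beta> @ [q]) ! (Suc s' + i)))"
    unfolding lk by (rule prod_lessThan_add)
  also have "(\<Prod>i<Suc s'. ff ((\<kappa>1 @ k # \<kappa>2) ! i) ((?g @ b\<beta> @ [q]) ! i)) =
      (\<Prod>i<Suc s'. ff ((\<kappa>1 @ [k]) ! i) ((a\<alpha> @ [p]) ! i + \<gamma> ! i))"
  proof (rule prod.cong[OF refl])
    fix i assume i: "i \<in> {..<Suc s'}"
    have "(\<kappa>1 @ k # \<kappa>2) ! i = (\<kappa>1 @ [k]) ! i" using i l1 by (auto simp: nth_append less_Suc_eq)
    moreover have "(?g @ b\<beta> @ [q]) ! i = (a\<alpha> @ [p]) ! i + \<gamma> ! i" using i lg' la lg by (simp add: nth_append)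
    ultimately show "ff ((\<kappa>1 @ k # \<kappa>2) ! i) ((?g @ b\<beta> @ [q]) ! i) = ff ((\<kappa>1 @ [k]) ! i) ((a\<alpha> @ [p]) ! i + \<gamma> ! i)" by simp
  qed
  also have "(\<Prod>i<m'. ff ((\<kappa>1 @ k # \<kappa>2) ! (Suc s' + i)) ((?g @ b\<beta> @ [q]) ! (Suc s' + i))) =
      (\<Prod>i<m'. ff (\<kappa>2 ! i) (b\<beta> ! i))"
  proof (rule prod.cong[OF refl])
    fix i assume i: "i \<in> {..<m'}"
    have "(\<kappa>1 @ k # \<kappa>2) ! (Suc s' + i) = \<kappa>2 ! i" using l1 by (simp add: nth_append)
    moreover have "(?g @ b\<beta> @ [q]) ! (Suc s' + i) = b\<beta> ! i" using i lg' lb by (simp add: nth_append)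
    ultimately show "ff ((\<kappa>1 @ k # \<kappa>2) ! (Suc s' + i)) ((?g @ b\<beta> @ [q]) ! (Suc s' + i)) = ff (\<kappa>2 ! i) (b\<beta> ! i)" by simp
  qed
  finally have P: "(\<Prod>i<length (\<kappa>1 @ k # \<kappa>2). ff ((\<kappa>1 @ k # \<kappa>2) ! i) ((?g @ b\<beta> @ [q]) ! i)) =
     (\<Prod>i<Suc s'. ff ((\<kappa>1 @ [k]) ! i) ((a\<alpha> @ [p]) ! i + \<gamma> ! i)) * (\<Prod>i<m'. ff (\<kappa>2 ! i) (b\<beta> ! i))" .
  show ?thesis unfolding psi_def bl lst P
    by (simp add: sg add.assoc del: of_nat_prod)
qed

context conf
begin

lemma ax_d1: "pr j (d a) b = - sc (of_nat j) (pr (j - 1) a b)"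
  using ca unfolding conformal_algebra_def by blast
lemma ax_d2: "pr j a (d b) = d (pr j a b) + sc (of_nat j) (pr (j - 1) a b)"
  using ca unfolding conformal_algebra_def by blast

lemma sesq1: "pr K ((d ^^ e) a) b = sc ((-1) ^ e * of_nat (ff K e)) (pr (K - e) a b)"
proof (induction e arbitrary: K)
  case 0
  then show ?case by simp
next
  case (Suc e)
  have "pr K ((d ^^ Suc e) a) b = - sc (of_nat K) (pr (K - 1) ((d ^^ e) a) b)" by (simp add: ax_d1)
  also have "\<dots> = sc (- (of_nat K * ((-1) ^ e * of_nat (ff (K - 1) e)))) (pr (K - 1 - e) a b)"
    by (simp add: Suc.IH)
  also have "of_nat K * ((-1) ^ e * of_nat (ff (K - 1) e)) = ((-1) ^ e * of_nat (ff K (Suc e)) :: 'k)"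
  proof (cases K)
    case 0
    then show ?thesis by (simp add: ff_zero)
  next
    case (Suc K')
    then show ?thesis by (simp add: ff_Suc_Suc algebra_simps)
  qed
  finally show ?case by simp
qed

lemma pascal_sum_vec:
  "(\<Sum>i\<le>Suc L. sc (of_nat (Suc L choose i)) (v i)) =
   (\<Sum>i\<le>L. sc (of_nat (L choose i)) (v i)) + (\<Sum>i\<le>L. sc (of_nat (L choose i)) (v (Suc i)))"
proof -
  have "(\<Sum>i\<le>Suc L. sc (of_nat (Suc L choose i)) (v i)) = v 0 + (\<Sum>i\<le>L. sc (of_nat (Suc L choose Suc i)) (v (Suc i)))"
    by (subst sum.atMost_Suc_shift) simp
  also have "\<dots> = v 0 + (\<Sum>i\<le>L. sc (of_nat (L choose Suc i)) (v (Suc i))) + (\<Sum>i\<le>L. sc (of_nat (L choose i)) (v (Suc i)))"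
    by (simp add: sum.distrib scale_left_distrib algebra_simps)
  also have "v 0 + (\<Sum>i\<le>L. sc (of_nat (L choose Suc i)) (v (Suc i))) = (\<Sum>i\<le>Suc L. sc (of_nat (L choose i)) (v i))"
    by (subst sum.atMost_Suc_shift) simp
  also have "\<dots> = (\<Sum>i\<le>L. sc (of_nat (L choose i)) (v i))" by (simp add: binomial_eq_0)
  finally show ?thesis .
qed

lemma sesq2: "pr L a ((d ^^ f) b) = (\<Sum>i\<le>f. sc (of_nat (f choose i)) (sc (of_nat (ff L i)) ((d ^^ (f - i)) (pr (L - i) a b))))"
proof (induction f arbitrary: b)
  case 0
  then show ?case by simp
next
  case (Suc f)
  let ?X = "\<lambda>i. pr (L - i) a b"
  have "pr L a ((d ^^ Suc f) b) = pr L a ((d ^^ f) (d b))" by (simp add: funpow_Suc_right del: funpow.simps)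
  also have "\<dots> = (\<Sum>i\<le>f. sc (of_nat (f choose i)) (sc (of_nat (ff L i)) ((d ^^ (f - i)) (pr (L - i) a (d b)))))"
    by (rule Suc.IH)
  also have "\<dots> = (\<Sum>i\<le>f. sc (of_nat (f choose i)) (sc (of_nat (ff L i)) ((d ^^ (Suc f - i)) (?X i)))) +
      (\<Sum>i\<le>f. sc (of_nat (f choose i)) (sc (of_nat (ff L (Suc i))) ((d ^^ (Suc f - Suc i)) (?X (Suc i)))))"
  proof -
    have "sc (of_nat (f choose i)) (sc (of_nat (ff L i)) ((d ^^ (f - i)) (pr (L - i) a (d b)))) =
      sc (of_nat (f choose i)) (sc (of_nat (ff L i)) ((d ^^ (Suc f - i)) (?X i))) +
      sc (of_nat (f choose i)) (sc (of_nat (ff L (Suc i))) ((d ^^ (Suc f - Suc i)) (?X (Suc i))))" if i: "i \<le> f" for i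
    proof -
      have e1: "(d ^^ (f - i)) (d (?X i)) = (d ^^ (Suc f - i)) (?X i)"
        using i by (simp add: Suc_diff_le funpow_Suc_right del: funpow.simps)
      have e2: "of_nat (ff L i) * of_nat (L - i) = (of_nat (ff L (Suc i)) :: 'k)"
        by (simp add: ff_Suc)
      have "pr (L - i) a (d b) = d (?X i) + sc (of_nat (L - i)) (?X (Suc i))"
        by (simp add: ax_d2)
      then show ?thesis using e1 e2 by (simp add: dpow_add dpow_scale scale_right_distrib)
    qed
    then show ?thesis by (simp add: sum.distrib)
  qed
  also have "\<dots> = (\<Sum>i\<le>Suc f. sc (of_nat (Suc f choose i)) (sc (of_nat (ff L i)) ((d ^^ (Suc f - i)) (?X i))))"
    by (rule pascal_sum_vec[symmetric])
  finally show ?case .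
qed

lemma Psi_EPn:
  "Psi \<kappa> (EPn \<alpha> a \<beta> b) = (\<Sum>s<prb a b.
     sc (((-1)^s / fact s) * (\<Sum>\<gamma>\<in>{\<gamma>. (Delta_it (length \<alpha>) s \<gamma> :: 'k) \<noteq> 0}. Delta_it (length \<alpha>) s \<gamma> * psi \<kappa> (map2 (+) \<alpha> \<gamma> @ \<beta>)))
       ((d ^^ (sum_list \<alpha> + s + sum_list \<beta> - sum_list \<kappa>)) (pr s a b)))"
proof -
  have "Psi \<kappa> (EPn \<alpha> a \<beta> b) = (\<Sum>s<prb a b. Psi \<kappa> (\<lambda>\<omega>. \<Sum>\<gamma>\<in>{\<gamma>. (Delta_it (length \<alpha>) s \<gamma> :: 'k) \<noteq> 0}.
      sing (map2 (+) \<alpha> \<gamma> @ \<beta>) (sc (Delta_it (length \<alpha>) s \<gamma> * ((-1)^s / fact s)) (pr s a b)) \<omega>))"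
    unfolding EPn_def by (rule Psi_sum) (auto intro!: fin_sum)
  also have "\<dots> = (\<Sum>s<prb a b. \<Sum>\<gamma>\<in>{\<gamma>. (Delta_it (length \<alpha>) s \<gamma> :: 'k) \<noteq> 0}.
      Psi \<kappa> (sing (map2 (+) \<alpha> \<gamma> @ \<beta>) (sc (Delta_it (length \<alpha>) s \<gamma> * ((-1)^s / fact s)) (pr s a b))))"
    by (intro sum.cong refl Psi_sum) auto
  also have "\<dots> = (\<Sum>s<prb a b. \<Sum>\<gamma>\<in>{\<gamma>. (Delta_it (length \<alpha>) s \<gamma> :: 'k) \<noteq> 0}.
      sc (((-1)^s / fact s) * (Delta_it (length \<alpha>) s \<gamma> * psi \<kappa> (map2 (+) \<alpha> \<gamma> @ \<beta>)))
       ((d ^^ (sum_list \<alpha> + s + sum_list \<beta> - sum_list \<kappa>)) (pr s a b)))"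
  proof (intro sum.cong refl)
    fix s \<gamma> assume "\<gamma> \<in> {\<gamma>. (Delta_it (length \<alpha>) s \<gamma> :: 'k) \<noteq> 0}"
    then have "length \<gamma> = length \<alpha>" "sum_list \<gamma> = s" using Delta_supp by blast+
    then have "sum_list (map2 (+) \<alpha> \<gamma> @ \<beta>) = sum_list \<alpha> + s + sum_list \<beta>" by (simp add: sum_list_map2_plus)
    then show "Psi \<kappa> (sing (map2 (+) \<alpha> \<gamma> @ \<beta>) (sc (Delta_it (length \<alpha>) s \<gamma> * ((-1)^s / fact s)) (pr s a b))) =
      sc (((-1)^s / fact s) * (Delta_it (length \<alpha>) s \<gamma> * psi \<kappa> (map2 (+) \<alpha> \<gamma> @ \<beta>)))
       ((d ^^ (sum_list \<alpha> + s + sum_list \<beta> - sum_list \<kappa>)) (pr s a b))"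
      by (simp add: Psi_sing dpow_scale mult_ac)
  qed
  also have "\<dots> = (\<Sum>s<prb a b.
     sc (((-1)^s / fact s) * (\<Sum>\<gamma>\<in>{\<gamma>. (Delta_it (length \<alpha>) s \<gamma> :: 'k) \<noteq> 0}. Delta_it (length \<alpha>) s \<gamma> * psi \<kappa> (map2 (+) \<alpha> \<gamma> @ \<beta>)))
       ((d ^^ (sum_list \<alpha> + s + sum_list \<beta> - sum_list \<kappa>)) (pr s a b)))"
    by (simp add: sum_distrib_left scale_sum_left)
  finally show ?thesis .
qed

end


lemma ff_div_fact: "(of_nat (ff L s) :: 'k::field_char_0) / fact s = of_nat (L choose s)"
  by (simp add: ff_binom)

lemma prod_snoc_ff:
  assumes "length \<kappa>1 = s'" "length a\<alpha> = s'"
  shows "(\<Prod>i<Suc s'. ff ((\<kappa>1 @ [k]) ! i) ((a\<alpha> @ [p]) ! i)) = (\<Prod>i<s'. ff (\<kappa>1 ! i) (a\<alpha> ! i)) * ff k p"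
proof -
  have "(\<Prod>i<s'. ff ((\<kappa>1 @ [k]) ! i) ((a\<alpha> @ [p]) ! i)) = (\<Prod>i<s'. ff (\<kappa>1 ! i) (a\<alpha> ! i))"
    using assms by (intro prod.cong refl) (simp add: nth_append)
  then show ?thesis using assms by (simp add: nth_append)
qed

lemma prod_ff_le:
  assumes "(\<Prod>i<length \<kappa>. ff (\<kappa> ! i) (a ! i)) \<noteq> 0" "length a = length \<kappa>"
  shows "sum_list a \<le> sum_list \<kappa>"
proof -
  have le: "a!j \<le> \<kappa>!j" if "j < length \<kappa>" for j using assms(1) that ff_nz_iff by fastforce
  show ?thesis using assms(2) by (simp add: sum_list_lt) (intro sum_mono, simp add: le)
qed

context conf
begin

lemma V5:
  assumes l1: "length \<kappa>1 = s'" and l2: "length \<kappa>2 = m'" and la: "length a\<alpha> = s'" and lb: "length b\<beta> = m'"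
  shows "(\<Sum>\<gamma>\<in>{\<gamma>. (Delta_it (Suc s') s \<gamma> :: 'k) \<noteq> 0}. (Delta_it (Suc s') s \<gamma> :: 'k) * psi (\<kappa>1 @ k # \<kappa>2) (map2 (+) (a\<alpha> @ [p]) \<gamma> @ b\<beta> @ [q]))
    = (-1) ^ (sum_list a\<alpha> + p + s + sum_list b\<beta>) * of_nat ((\<Prod>i<s'. ff (\<kappa>1 ! i) (a\<alpha> ! i)) * ff k p) *
      of_nat (ff (sum_list \<kappa>1 + k - (sum_list a\<alpha> + p)) s) * of_nat (\<Prod>i<m'. ff (\<kappa>2 ! i) (b\<beta> ! i)) *
      of_nat (ff q (sum_list \<kappa>1 + k + sum_list \<kappa>2 - (sum_list a\<alpha> + p + s + sum_list b\<beta>)))"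
proof -
  let ?G = "{\<gamma>. (Delta_it (Suc s') s \<gamma> :: 'k) \<noteq> 0}"
  let ?c = "(-1) ^ (sum_list a\<alpha> + p + s + sum_list b\<beta>) * of_nat (\<Prod>i<m'. ff (\<kappa>2 ! i) (b\<beta> ! i)) *
      (of_nat (ff q (sum_list \<kappa>1 + k + sum_list \<kappa>2 - (sum_list a\<alpha> + p + s + sum_list b\<beta>))) :: 'k)"
  have "(\<Sum>\<gamma>\<in>?G. (Delta_it (Suc s') s \<gamma> :: 'k) * psi (\<kappa>1 @ k # \<kappa>2) (map2 (+) (a\<alpha> @ [p]) \<gamma> @ b\<beta> @ [q]))
     = (\<Sum>\<gamma>\<in>?G. ?c * ((Delta_it (Suc s') s \<gamma> :: 'k) * of_nat (\<Prod>i<Suc s'. ff ((\<kappa>1 @ [k]) ! i) ((a\<alpha> @ [p]) ! i + \<gamma> ! i))))"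
  proof (rule sum.cong[OF refl])
    fix \<gamma> assume "\<gamma> \<in> ?G"
    then have lg: "length \<gamma> = Suc s'" and sg: "sum_list \<gamma> = s" using Delta_supp by blast+
    show "(Delta_it (Suc s') s \<gamma> :: 'k) * psi (\<kappa>1 @ k # \<kappa>2) (map2 (+) (a\<alpha> @ [p]) \<gamma> @ b\<beta> @ [q]) =
      ?c * ((Delta_it (Suc s') s \<gamma> :: 'k) * of_nat (\<Prod>i<Suc s'. ff ((\<kappa>1 @ [k]) ! i) ((a\<alpha> @ [p]) ! i + \<gamma> ! i)))"
      unfolding psi_split[OF l1 l2 la lb lg] sg by (simp only: mult_ac)
  qed
  also have "\<dots> = ?c * (\<Sum>\<gamma>\<in>?G. (Delta_it (Suc s') s \<gamma> :: 'k) * of_nat (\<Prod>i<Suc s'. ff ((\<kappa>1 @ [k]) ! i) ((a\<alpha> @ [p]) ! i + \<gamma> ! i)))"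
    by (simp only: sum_distrib_left)
  also have "\<dots> = ?c * (of_nat (\<Prod>i<Suc s'. ff ((\<kappa>1 @ [k]) ! i) ((a\<alpha> @ [p]) ! i)) *
       of_nat (ff (sum_list (\<kappa>1 @ [k]) - sum_list (a\<alpha> @ [p])) s))"
  proof -
    have lK: "length (\<kappa>1 @ [k]) = Suc s'" and lA: "length (a\<alpha> @ [p]) = Suc s'" using l1 la by simp_all
    show ?thesis unfolding Delta_vdm_off[OF lK lA] ..
  qed
  also have "\<dots> = (-1) ^ (sum_list a\<alpha> + p + s + sum_list b\<beta>) * of_nat ((\<Prod>i<s'. ff (\<kappa>1 ! i) (a\<alpha> ! i)) * ff k p) *
      of_nat (ff (sum_list \<kappa>1 + k - (sum_list a\<alpha> + p)) s) * of_nat (\<Prod>i<m'. ff (\<kappa>2 ! i) (b\<beta> ! i)) *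
      of_nat (ff q (sum_list \<kappa>1 + k + sum_list \<kappa>2 - (sum_list a\<alpha> + p + s + sum_list b\<beta>)))"
    unfolding prod_snoc_ff[OF l1 la] by (simp del: of_nat_prod of_nat_mult add: mult_ac)
  finally show ?thesis .
qed

lemma FI:
  "(\<Sum>s<prb a b. sc (of_nat (L choose s) * of_nat (ff q (L + L2 - s))) ((d ^^ (q + s - (L + L2))) (pr s a b)))
    = sc (of_nat (ff q L2)) (pr L a ((d ^^ (q - L2)) b))"
proof (cases "L2 \<le> q")
  case False
  have z: "sc (of_nat (L choose s) * of_nat (ff q (L + L2 - s))) ((d ^^ (q + s - (L + L2))) (pr s a b)) = 0" for s
  proof (cases "s \<le> L")
    case True
    then have "q < L + L2 - s" using False by simp
    then show ?thesis by (simp add: ff_zero)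
  qed (simp add: binomial_eq_0)
  show ?thesis by (simp only: z sum.neutral_const) (use False in \<open>simp add: ff_zero\<close>)
next
  case True
  define f where "f = q - L2"
  let ?X = "\<lambda>i. pr (L - i) a b"
  let ?g = "\<lambda>s. sc (of_nat (L choose s) * of_nat (ff q (L + L2 - s))) ((d ^^ (q + s - (L + L2))) (pr s a b))"
  let ?h = "\<lambda>i. sc (of_nat (ff q L2) * (of_nat (f choose i) * of_nat (ff L i))) ((d ^^ (f - i)) (?X i))"
  define R where "R = prb a b + L + 1"
  have "(\<Sum>s<prb a b. ?g s) = (\<Sum>s<R. ?g s)"
    by (rule sum.mono_neutral_left) (auto simp: R_def pr_bound)
  also have "\<dots> = (\<Sum>s\<le>L. ?g s)"
    by (rule sum.mono_neutral_right) (auto simp: R_def binomial_eq_0)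
  also have "\<dots> = (\<Sum>i\<le>L. ?g (L - i))"
    using sum.atLeastAtMost_rev[of ?g 0 L] by (simp add: atLeast0AtMost)
  also have "\<dots> = (\<Sum>i\<le>L + f. if i \<le> L then ?g (L - i) else 0)"
    by (rule sum.mono_neutral_cong_left) auto
  also have "\<dots> = (\<Sum>i\<le>L + f. if i \<le> f then ?h i else 0)"
  proof (rule sum.cong[OF refl])
    fix i assume "i \<in> {..L + f}"
    show "(if i \<le> L then ?g (L - i) else 0) = (if i \<le> f then ?h i else 0)"
    proof (cases "i \<le> L"; cases "i \<le> f")
      assume iL: "i \<le> L" and iF: "i \<le> f"
      have e1: "L + L2 - (L - i) = L2 + i" using iL by simp
      have e2: "q + (L - i) - (L + L2) = f - i" using iL iF True unfolding f_def by simp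
      have c: "(of_nat (L choose (L - i)) * of_nat (ff q (L2 + i)) :: 'k) = of_nat (ff q L2) * (of_nat (f choose i) * of_nat (ff L i))"
      proof -
        have "L choose (L - i) = L choose i" using iL binomial_symmetric[of i L] by simp
        moreover have "ff q (L2 + i) = ff q L2 * (fact i * (f choose i))" unfolding f_def by (simp only: ff_add ff_binom[of "q - L2" i])
        moreover have "ff L i = fact i * (L choose i)" by (simp add: ff_binom)
        ultimately show ?thesis by (simp add: mult_ac)
      qed
      show ?thesis using iL iF by (simp only: if_True e1 e2 c)
    next
      assume iL: "i \<le> L" and iF: "\<not> i \<le> f"
      have "q < L + L2 - (L - i)" using iL iF True unfolding f_def by simp
      then show ?thesis using iL iF by (simp add: ff_zero)
    next
      assume iL: "\<not> i \<le> L" and iF: "i \<le> f"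
      then show ?thesis by (simp add: ff_zero)
    next
      assume "\<not> i \<le> L" "\<not> i \<le> f"
      then show ?thesis by simp
    qed
  qed
  also have "\<dots> = (\<Sum>i\<le>f. ?h i)"
    by (rule sum.mono_neutral_cong_right) auto
  also have "\<dots> = sc (of_nat (ff q L2)) (pr L a ((d ^^ (q - L2)) b))"
    unfolding sesq2 f_def[symmetric] by (simp add: scale_sum_right mult_ac)
  finally show ?thesis .
qed

lemma sign_scalar:
  "((-1::'k) ^ s / fact s) * ((-1) ^ (A + s) * X1 * of_nat (ff L s) * X2 * X3) =
   (-1) ^ A * (X1 * X2) * (of_nat (L choose s) * X3)"
proof -
  have m: "(-1::'k) ^ s * (-1) ^ s = 1" by (simp add: power_add[symmetric])
  have "((-1::'k) ^ s / fact s) * ((-1) ^ (A + s) * X1 * of_nat (ff L s) * X2 * X3) =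
      ((-1) ^ s * (-1) ^ s) * (-1) ^ A * (X1 * X2) * ((of_nat (ff L s) / fact s) * X3)"
    by (simp add: power_add field_simps)
  also have "\<dots> = (-1) ^ A * (X1 * X2) * (of_nat (L choose s) * X3)" by (simp only: m ff_div_fact) simp
  finally show ?thesis .
qed

lemma LHS_eq:
  assumes l1: "length \<kappa>1 = s'" and l2: "length \<kappa>2 = m'" and la: "length a\<alpha> = s'" and lb: "length b\<beta> = m'"
  shows "Psi (\<kappa>1 @ k # \<kappa>2) (EPn (a\<alpha> @ [p]) a (b\<beta> @ [q]) b) =
    sc ((-1) ^ (sum_list a\<alpha> + p + sum_list b\<beta>) *
        of_nat ((\<Prod>i<s'. ff (\<kappa>1 ! i) (a\<alpha> ! i)) * ff k p * (\<Prod>i<m'. ff (\<kappa>2 ! i) (b\<beta> ! i)) *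
                ff q (sum_list \<kappa>2 - sum_list b\<beta>)))
       (pr (sum_list \<kappa>1 + k - (sum_list a\<alpha> + p)) a ((d ^^ (q - (sum_list \<kappa>2 - sum_list b\<beta>))) b))"
proof -
  define P1 where "P1 = (\<Prod>i<s'. ff (\<kappa>1 ! i) (a\<alpha> ! i))"
  define P2 where "P2 = (\<Prod>i<m'. ff (\<kappa>2 ! i) (b\<beta> ! i))"
  define L where "L = sum_list \<kappa>1 + k - (sum_list a\<alpha> + p)"
  define L2 where "L2 = sum_list \<kappa>2 - sum_list b\<beta>"
  define A where "A = sum_list a\<alpha> + p + sum_list b\<beta>"
  let ?\<kappa> = "\<kappa>1 @ k # \<kappa>2"
  let ?E = "\<lambda>s. sum_list \<kappa>1 + k + sum_list \<kappa>2 - (sum_list a\<alpha> + p + s + sum_list b\<beta>)"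
  have la': "length (a\<alpha> @ [p]) = Suc s'" using la by simp
  have "Psi ?\<kappa> (EPn (a\<alpha> @ [p]) a (b\<beta> @ [q]) b) = (\<Sum>s<prb a b.
     sc (((-1)^s / fact s) * (\<Sum>\<gamma>\<in>{\<gamma>. (Delta_it (Suc s') s \<gamma> :: 'k) \<noteq> 0}. Delta_it (Suc s') s \<gamma> * psi ?\<kappa> (map2 (+) (a\<alpha> @ [p]) \<gamma> @ b\<beta> @ [q])))
       ((d ^^ (sum_list (a\<alpha> @ [p]) + s + sum_list (b\<beta> @ [q]) - sum_list ?\<kappa>)) (pr s a b)))"
    using Psi_EPn[of ?\<kappa> "a\<alpha> @ [p]" a "b\<beta> @ [q]" b] la' by simp
  also have "\<dots> = (\<Sum>s<prb a b. sc ((-1) ^ A * of_nat (P1 * ff k p * P2) * (of_nat (L choose s) * of_nat (ff q (?E s))))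
       ((d ^^ (sum_list (a\<alpha> @ [p]) + s + sum_list (b\<beta> @ [q]) - sum_list ?\<kappa>)) (pr s a b)))"
  proof (rule sum.cong[OF refl])
    fix s
    have "((-1)^s / fact s) * (\<Sum>\<gamma>\<in>{\<gamma>. (Delta_it (Suc s') s \<gamma> :: 'k) \<noteq> 0}. (Delta_it (Suc s') s \<gamma> :: 'k) * psi ?\<kappa> (map2 (+) (a\<alpha> @ [p]) \<gamma> @ b\<beta> @ [q]))
       = ((-1)^s / fact s) * ((-1) ^ (A + s) * of_nat (P1 * ff k p) * of_nat (ff L s) * of_nat P2 * of_nat (ff q (?E s)))"
      unfolding V5[OF l1 l2 la lb] P1_def P2_def L_def A_def by (simp add: add_ac)
    also have "\<dots> = (-1) ^ A * of_nat (P1 * ff k p * P2) * (of_nat (L choose s) * of_nat (ff q (?E s)))"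
      unfolding sign_scalar by simp
    finally show "sc (((-1)^s / fact s) * (\<Sum>\<gamma>\<in>{\<gamma>. (Delta_it (Suc s') s \<gamma> :: 'k) \<noteq> 0}. Delta_it (Suc s') s \<gamma> * psi ?\<kappa> (map2 (+) (a\<alpha> @ [p]) \<gamma> @ b\<beta> @ [q])))
       ((d ^^ (sum_list (a\<alpha> @ [p]) + s + sum_list (b\<beta> @ [q]) - sum_list ?\<kappa>)) (pr s a b)) =
      sc ((-1) ^ A * of_nat (P1 * ff k p * P2) * (of_nat (L choose s) * of_nat (ff q (?E s))))
       ((d ^^ (sum_list (a\<alpha> @ [p]) + s + sum_list (b\<beta> @ [q]) - sum_list ?\<kappa>)) (pr s a b))" by simp
  qed
  also have "\<dots> = sc ((-1) ^ A * of_nat (P1 * ff k p * P2 * ff q L2)) (pr L a ((d ^^ (q - L2)) b))"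
  proof (cases "P1 * ff k p * P2 = 0")
    case True
    have z: "of_nat (P1 * ff k p * P2) = (0::'k)" using True by simp
    have z2: "of_nat (P1 * ff k p * P2 * ff q L2) = (0::'k)" using True by simp
    show ?thesis by (simp only: z z2 mult_zero_left mult_zero_right scale_zero_left sum.neutral_const)
  next
    case False
    then have P1: "P1 \<noteq> 0" and kp: "ff k p \<noteq> 0" and P2: "P2 \<noteq> 0" by auto
    have s1: "sum_list a\<alpha> \<le> sum_list \<kappa>1" using prod_ff_le[of \<kappa>1 a\<alpha>] P1 l1 la unfolding P1_def by simp
    have s2: "sum_list b\<beta> \<le> sum_list \<kappa>2" using prod_ff_le[of \<kappa>2 b\<beta>] P2 l2 lb unfolding P2_def by simp
    have pk: "p \<le> k" using kp ff_nz_iff by blast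
    have E: "?E s = L + L2 - s" for s unfolding L_def L2_def using s1 s2 pk by simp
    have X: "sum_list (a\<alpha> @ [p]) + s + sum_list (b\<beta> @ [q]) - sum_list ?\<kappa> = q + s - (L + L2)" for s
      unfolding L_def L2_def using s1 s2 pk by simp
    have "(\<Sum>s<prb a b. sc ((-1) ^ A * of_nat (P1 * ff k p * P2) * (of_nat (L choose s) * of_nat (ff q (?E s))))
       ((d ^^ (sum_list (a\<alpha> @ [p]) + s + sum_list (b\<beta> @ [q]) - sum_list ?\<kappa>)) (pr s a b))) =
       sc ((-1) ^ A * of_nat (P1 * ff k p * P2)) (\<Sum>s<prb a b. sc (of_nat (L choose s) * of_nat (ff q (L + L2 - s)))
         ((d ^^ (q + s - (L + L2))) (pr s a b)))"
      unfolding E X scale_sum_right by simp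
    also have "\<dots> = sc ((-1) ^ A * of_nat (P1 * ff k p * P2)) (sc (of_nat (ff q L2)) (pr L a ((d ^^ (q - L2)) b)))"
      by (simp only: FI)
    finally show ?thesis by (simp add: mult_ac)
  qed
  finally show ?thesis unfolding P1_def P2_def L_def L2_def A_def .
qed

lemma Jset_facts:
  assumes "j \<in> Jset \<kappa>1"
  shows "length j = length \<kappa>1" "\<And>i. i < length \<kappa>1 \<Longrightarrow> j ! i \<le> \<kappa>1 ! i"
    "length (map2 (-) \<kappa>1 j) = length \<kappa>1" "sum_list (map2 (-) \<kappa>1 j) = sum_list \<kappa>1 - sum_list j"
    "sum_list j \<le> sum_list \<kappa>1"
proof -
  show lj: "length j = length \<kappa>1" using assms by (simp add: Jset_def list_all2_lengthD)
  show le: "\<And>i. i < length \<kappa>1 \<Longrightarrow> j ! i \<le> \<kappa>1 ! i" using assms by (auto simp: Jset_def list_all2_conv_all_nth)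
  show "length (map2 (-) \<kappa>1 j) = length \<kappa>1" using lj by simp
  have "sum_list (map2 (-) \<kappa>1 j) = (\<Sum>i<length \<kappa>1. \<kappa>1 ! i - j ! i)" using lj by (simp add: sum_list_lt)
  also have "\<dots> = (\<Sum>i<length \<kappa>1. \<kappa>1 ! i) - (\<Sum>i<length \<kappa>1. j ! i)" by (rule sum_subtractf_nat) (simp add: le)
  finally show "sum_list (map2 (-) \<kappa>1 j) = sum_list \<kappa>1 - sum_list j" using lj by (simp add: sum_list_lt)
  show "sum_list j \<le> sum_list \<kappa>1" using lj le by (simp add: sum_list_lt) (intro sum_mono, simp)
qed

lemma bracket_J:
  assumes "a1 \<le> K1"
  shows "(\<Sum>J\<le>K1 - a1. of_nat ((K1 - a1) choose J) *
      (of_nat (ff p (K1 - J - a1)) * (-1) ^ (a1 + p - (K1 - J)) * of_nat (ff (k + J) (a1 + p - (K1 - J)))))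
    = ((-1) ^ p * of_nat (ff k p) :: 'k)"
proof -
  define L1 where "L1 = K1 - a1"
  let ?G = "\<lambda>J. of_nat (L1 choose J) * (of_nat (ff p (K1 - J - a1)) * (-1) ^ (a1 + p - (K1 - J)) * (of_nat (ff (k + J) (a1 + p - (K1 - J))) :: 'k))"
  have "(\<Sum>J\<le>L1. ?G J) = (\<Sum>i\<le>L1. ?G (L1 - i))"
    using sum.atLeastAtMost_rev[of ?G 0 L1] by (simp add: atLeast0AtMost)
  also have "\<dots> = (\<Sum>i\<le>L1. of_nat (L1 choose i) * (of_nat (ff p i) * (-1)^(p - i) * of_nat (ff (k + L1 - i) (p - i))))"
  proof (rule sum.cong[OF refl])
    fix i assume "i \<in> {..L1}"
    then have i: "i \<le> L1" by simp
    have e1: "K1 - (L1 - i) - a1 = i" "a1 + p - (K1 - (L1 - i)) = p - i" "k + (L1 - i) = k + L1 - i"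
      using i assms unfolding L1_def by auto
    have e2: "L1 choose (L1 - i) = L1 choose i" using i binomial_symmetric[of i L1] by simp
    show "?G (L1 - i) = of_nat (L1 choose i) * (of_nat (ff p i) * (-1)^(p - i) * of_nat (ff (k + L1 - i) (p - i)))"
      by (simp only: e1 e2)
  qed
  also have "\<dots> = (-1) ^ p * of_nat (ff k p)" by (rule bracket)
  finally show ?thesis unfolding L1_def .
qed

lemma RHS_eq:
  assumes l1: "length \<kappa>1 = s'" and l2: "length \<kappa>2 = m'" and la: "length a\<alpha> = s'" and lb: "length b\<beta> = m'"
  shows "(\<Sum>j\<in>Jset \<kappa>1. sc (\<Prod>i<length \<kappa>1. of_nat (\<kappa>1 ! i choose j ! i))
        (pr (k + sum_list j) (sc (psi (map2 (-) \<kappa>1 j) (a\<alpha> @ [p])) ((d ^^ (sum_list (a\<alpha> @ [p]) - sum_list (map2 (-) \<kappa>1 j))) a))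
                             (sc (psi \<kappa>2 (b\<beta> @ [q])) ((d ^^ (sum_list (b\<beta> @ [q]) - sum_list \<kappa>2)) b))))
    = sc ((-1) ^ (sum_list a\<alpha> + p + sum_list b\<beta>) *
        of_nat ((\<Prod>i<s'. ff (\<kappa>1 ! i) (a\<alpha> ! i)) * ff k p * (\<Prod>i<m'. ff (\<kappa>2 ! i) (b\<beta> ! i)) *
                ff q (sum_list \<kappa>2 - sum_list b\<beta>)))
       (pr (sum_list \<kappa>1 + k - (sum_list a\<alpha> + p)) a ((d ^^ (q - (sum_list \<kappa>2 - sum_list b\<beta>))) b))"
proof -
  define P1 where "P1 = (\<Prod>i<s'. ff (\<kappa>1 ! i) (a\<alpha> ! i))"
  define P2 where "P2 = (\<Prod>i<m'. ff (\<kappa>2 ! i) (b\<beta> ! i))"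
  define L where "L = sum_list \<kappa>1 + k - (sum_list a\<alpha> + p)"
  define L2 where "L2 = sum_list \<kappa>2 - sum_list b\<beta>"
  define V where "V = pr L a ((d ^^ (q - L2)) b)"
  define G where "G = (\<lambda>J. of_nat (ff p (sum_list \<kappa>1 - J - sum_list a\<alpha>)) * (-1) ^ (sum_list a\<alpha> + p - (sum_list \<kappa>1 - J)) *
      (of_nat (ff (k + J) (sum_list a\<alpha> + p - (sum_list \<kappa>1 - J))) :: 'k))"
  define N where "N = map2 (-) \<kappa>1 a\<alpha>"
  define c2 where "c2 = ((-1) ^ (sum_list a\<alpha> + sum_list b\<beta>) * of_nat P2 * of_nat (ff q L2) :: 'k)"
  define W where "W = (\<lambda>j. c2 * (of_nat (\<Prod>i<s'. (N ! i choose j ! i)) * of_nat P1 * G (sum_list j)))"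
  have psi2: "psi \<kappa>2 (b\<beta> @ [q]) = (-1) ^ sum_list b\<beta> * of_nat P2 * (of_nat (ff q L2) :: 'k)"
    using lb l2 unfolding P2_def L2_def by (simp add: psi_snoc)
  have trm: "sc (\<Prod>i<length \<kappa>1. of_nat (\<kappa>1 ! i choose j ! i))
        (pr (k + sum_list j) (sc (psi (map2 (-) \<kappa>1 j) (a\<alpha> @ [p])) ((d ^^ (sum_list (a\<alpha> @ [p]) - sum_list (map2 (-) \<kappa>1 j))) a))
                             (sc (psi \<kappa>2 (b\<beta> @ [q])) ((d ^^ (sum_list (b\<beta> @ [q]) - sum_list \<kappa>2)) b)))
      = sc (W j) V" if j: "j \<in> Jset \<kappa>1" for j
  proof -
    note jf = Jset_facts[OF j]
    let ?w = "map2 (-) \<kappa>1 j"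
    let ?e = "sum_list a\<alpha> + p - (sum_list \<kappa>1 - sum_list j)"
    let ?f = "sum_list b\<beta> + q - sum_list \<kappa>2"
    let ?C = "(\<Prod>i<length \<kappa>1. of_nat (\<kappa>1 ! i choose j ! i)) :: 'k"
    let ?Pw = "\<Prod>i<s'. ff (?w ! i) (a\<alpha> ! i)"
    have lw: "length ?w = s'" using jf l1 by simp
    have psi1: "psi ?w (a\<alpha> @ [p]) = (-1) ^ sum_list a\<alpha> * of_nat ?Pw * (of_nat (ff p (sum_list \<kappa>1 - sum_list j - sum_list a\<alpha>)) :: 'k)"
      using lw la jf by (simp add: psi_snoc)
    define W0 where "W0 = ?C * ((-1) ^ sum_list a\<alpha> * of_nat ?Pw * of_nat (ff p (sum_list \<kappa>1 - sum_list j - sum_list a\<alpha>))) *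
        ((-1) ^ sum_list b\<beta> * of_nat P2 * of_nat (ff q L2)) * ((-1) ^ ?e * of_nat (ff (k + sum_list j) ?e))"
    have "sc ?C (pr (k + sum_list j) (sc (psi ?w (a\<alpha> @ [p])) ((d ^^ (sum_list (a\<alpha> @ [p]) - sum_list ?w)) a))
                             (sc (psi \<kappa>2 (b\<beta> @ [q])) ((d ^^ (sum_list (b\<beta> @ [q]) - sum_list \<kappa>2)) b)))
       = sc W0 (pr (k + sum_list j - ?e) a ((d ^^ ?f) b))"
      unfolding psi1 psi2 W0_def using jf by (simp add: pr_scale1 pr_scale2 sesq1 add_ac)
    also have "\<dots> = sc W0 V"
    proof (cases "W0 = 0")
      case False
      then have nz: "?Pw \<noteq> 0" "ff p (sum_list \<kappa>1 - sum_list j - sum_list a\<alpha>) \<noteq> 0" "P2 \<noteq> 0" "ff q L2 \<noteq> 0"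
          "ff (k + sum_list j) ?e \<noteq> 0"
        unfolding W0_def by auto
      have h1: "sum_list a\<alpha> \<le> sum_list \<kappa>1 - sum_list j"
        using prod_ff_le[of ?w a\<alpha>] nz(1) lw la jf by simp
      have h2: "sum_list \<kappa>1 - sum_list j - sum_list a\<alpha> \<le> p" using nz(2) ff_nz_iff by blast
      have h3: "sum_list b\<beta> \<le> sum_list \<kappa>2" using prod_ff_le[of \<kappa>2 b\<beta>] nz(3) l2 lb unfolding P2_def by simp
      have h4: "L2 \<le> q" using nz(4) ff_nz_iff by blast
      have h5: "?e \<le> k + sum_list j" using nz(5) ff_nz_iff by blast
      have h6: "sum_list j \<le> sum_list \<kappa>1" using jf by simp
      have "k + sum_list j - ?e = L" unfolding L_def using h1 h2 h5 h6 by linarith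
      moreover have "?f = q - L2" unfolding L2_def using h3 h4 unfolding L2_def by linarith
      ultimately show ?thesis unfolding V_def by simp
    qed simp
    also have "W0 = W j"
    proof -
      have cf: "?C * of_nat ?Pw = of_nat (\<Prod>i<s'. (N ! i choose j ! i)) * of_nat P1"
      proof -
        have "(\<Prod>i<s'. (\<kappa>1 ! i choose j ! i) * ff (?w ! i) (a\<alpha> ! i)) = (\<Prod>i<s'. ff (\<kappa>1 ! i) (a\<alpha> ! i) * (N ! i choose j ! i))"
          using jf l1 la unfolding N_def by (intro prod.cong refl) (simp add: choose_ff)
        then have eq: "(\<Prod>i<s'. (\<kappa>1 ! i choose j ! i)) * ?Pw = (\<Prod>i<s'. (N ! i choose j ! i)) * P1"
          unfolding P1_def by (simp add: prod.distrib mult_ac)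
        have C: "?C = of_nat (\<Prod>i<s'. \<kappa>1 ! i choose j ! i)" using l1 by (simp add: of_nat_prod)
        show ?thesis unfolding C of_nat_mult[symmetric] eq ..
      qed
      have G': "G (sum_list j) = of_nat (ff p (sum_list \<kappa>1 - sum_list j - sum_list a\<alpha>)) * (-1) ^ ?e * of_nat (ff (k + sum_list j) ?e)"
        unfolding G_def ..
      have "W0 = c2 * ((?C * of_nat ?Pw) * G (sum_list j))"
        unfolding W0_def c2_def G' by (simp add: power_add mult_ac)
      then show ?thesis unfolding cf W_def by (simp add: mult_ac)
    qed
    finally show ?thesis using l1 by simp
  qed
  have "(\<Sum>j\<in>Jset \<kappa>1. sc (\<Prod>i<length \<kappa>1. of_nat (\<kappa>1 ! i choose j ! i))
        (pr (k + sum_list j) (sc (psi (map2 (-) \<kappa>1 j) (a\<alpha> @ [p])) ((d ^^ (sum_list (a\<alpha> @ [p]) - sum_list (map2 (-) \<kappa>1 j))) a))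
                             (sc (psi \<kappa>2 (b\<beta> @ [q])) ((d ^^ (sum_list (b\<beta> @ [q]) - sum_list \<kappa>2)) b))))
      = (\<Sum>j\<in>Jset \<kappa>1. sc (W j) V)" by (rule sum.cong[OF refl]) (rule trm)
  also have "\<dots> = sc (\<Sum>j\<in>Jset \<kappa>1. W j) V" by (simp add: scale_sum_left)
  also have "(\<Sum>j\<in>Jset \<kappa>1. W j) = (-1) ^ (sum_list a\<alpha> + p + sum_list b\<beta>) * of_nat (P1 * ff k p * P2 * ff q L2)"
  proof (cases "P1 = 0")
    case True
    then show ?thesis unfolding W_def by simp
  next
    case False
    have s1: "sum_list a\<alpha> \<le> sum_list \<kappa>1" using prod_ff_le[of \<kappa>1 a\<alpha>] False l1 la unfolding P1_def by simp
    have le: "a\<alpha> ! i \<le> \<kappa>1 ! i" if "i < s'" for i using False that ff_nz_iff unfolding P1_def by fastforce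
    have lN: "length N = length \<kappa>1" using l1 la unfolding N_def by simp
    have leN: "\<forall>i<length \<kappa>1. N ! i \<le> \<kappa>1 ! i" using l1 la unfolding N_def by simp
    have sN: "sum_list N = sum_list \<kappa>1 - sum_list a\<alpha>"
    proof -
      have "sum_list N = (\<Sum>i<s'. \<kappa>1 ! i - a\<alpha> ! i)" using l1 la unfolding N_def by (simp add: sum_list_lt)
      also have "\<dots> = (\<Sum>i<s'. \<kappa>1 ! i) - (\<Sum>i<s'. a\<alpha> ! i)" by (rule sum_subtractf_nat) (simp add: le)
      finally show ?thesis using l1 la by (simp add: sum_list_lt)
    qed
    have "(\<Sum>j\<in>Jset \<kappa>1. W j) = c2 * of_nat P1 * (\<Sum>j\<in>Jset \<kappa>1. of_nat (\<Prod>i<length \<kappa>1. N ! i choose j ! i) * G (sum_list j))"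
      unfolding W_def using l1 by (simp add: sum_distrib_left mult_ac del: of_nat_prod)
    also have "(\<Sum>j\<in>Jset \<kappa>1. of_nat (\<Prod>i<length \<kappa>1. N ! i choose j ! i) * G (sum_list j)) =
        (\<Sum>J\<le>sum_list N. of_nat (sum_list N choose J) * G J)"
      by (rule multi_binom[OF lN leN])
    also have "\<dots> = (-1) ^ p * of_nat (ff k p)"
      unfolding sN G_def by (rule bracket_J[OF s1])
    finally show ?thesis unfolding c2_def by (simp add: power_add mult_ac)
  qed
  finally show ?thesis unfolding V_def P1_def P2_def L_def L2_def .
qed

end


context conf
begin

lemma CoreAB:
  assumes l1: "length \<kappa>1 = s'" and l2: "length \<kappa>2 = m'" and la: "length \<alpha> = Suc s'" and lb: "length \<beta> = Suc m'"
  shows "Psi (\<kappa>1 @ k # \<kappa>2) (EPn \<alpha> a \<beta> b) =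
    (\<Sum>j\<in>Jset \<kappa>1. sc (\<Prod>i<length \<kappa>1. of_nat (\<kappa>1 ! i choose j ! i))
        (pr (k + sum_list j) (sc (psi (map2 (-) \<kappa>1 j) \<alpha>) ((d ^^ (sum_list \<alpha> - sum_list (map2 (-) \<kappa>1 j))) a))
                             (sc (psi \<kappa>2 \<beta>) ((d ^^ (sum_list \<beta> - sum_list \<kappa>2)) b))))"
proof -
  obtain a\<alpha> p where A: "\<alpha> = a\<alpha> @ [p]" "length a\<alpha> = s'" using la by (cases \<alpha> rule: rev_cases) auto
  obtain b\<beta> q where B: "\<beta> = b\<beta> @ [q]" "length b\<beta> = m'" using lb by (cases \<beta> rule: rev_cases) auto
  show ?thesis unfolding A(1) B(1) LHS_eq[OF l1 l2 A(2) B(2)] RHS_eq[OF l1 l2 A(2) B(2)] ..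
qed

lemma Core:
  assumes A: "tens_ok (Suc s') A" and B: "tens_ok (Suc m') B" and l1: "length \<kappa>1 = s'" and l2: "length \<kappa>2 = m'"
  shows "Psi (\<kappa>1 @ k # \<kappa>2) (EP sc pr (Suc s') (Suc m') A B) =
    (\<Sum>j\<in>{j. list_all2 (\<le>) j \<kappa>1}. sc (\<Prod>i<length \<kappa>1. of_nat ((\<kappa>1 ! i) choose (j ! i)))
        (pr (k + sum_list j) (Psi (map2 (-) \<kappa>1 j) A) (Psi \<kappa>2 B)))"
proof -
  let ?\<kappa> = "\<kappa>1 @ k # \<kappa>2"
  let ?SA = "{\<alpha>. A \<alpha> \<noteq> 0}" and ?SB = "{\<beta>. B \<beta> \<noteq> 0}"
  have fA: "finite ?SA" and lA: "\<And>\<alpha>. \<alpha> \<in> ?SA \<Longrightarrow> length \<alpha> = Suc s'" using A by (auto simp: tens_ok_def)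
  have fB: "finite ?SB" and lB: "\<And>\<beta>. \<beta> \<in> ?SB \<Longrightarrow> length \<beta> = Suc m'" using B by (auto simp: tens_ok_def)
  have finE: "fin (EPn \<alpha> a \<beta> b)" for \<alpha> a \<beta> b using tens_ok_EPn tens_ok_fin by blast
  let ?C = "\<lambda>j. (\<Prod>i<length \<kappa>1. of_nat (\<kappa>1 ! i choose j ! i)) :: 'k"
  let ?u = "\<lambda>j \<alpha>. sc (psi (map2 (-) \<kappa>1 j) \<alpha>) ((d ^^ (sum_list \<alpha> - sum_list (map2 (-) \<kappa>1 j))) (A \<alpha>))"
  let ?v = "\<lambda>\<beta>. sc (psi \<kappa>2 \<beta>) ((d ^^ (sum_list \<beta> - sum_list \<kappa>2)) (B \<beta>))"
  have "Psi ?\<kappa> (EP sc pr (Suc s') (Suc m') A B) = Psi ?\<kappa> (\<lambda>\<omega>. \<Sum>\<alpha>\<in>?SA. \<Sum>\<beta>\<in>?SB. EPn \<alpha> (A \<alpha>) \<beta> (B \<beta>) \<omega>)"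
    unfolding EP_repr[OF A B] ..
  also have "\<dots> = (\<Sum>\<alpha>\<in>?SA. Psi ?\<kappa> (\<lambda>\<omega>. \<Sum>\<beta>\<in>?SB. EPn \<alpha> (A \<alpha>) \<beta> (B \<beta>) \<omega>))"
    by (rule Psi_sum[OF fA]) (intro fin_sum fB finE)
  also have "\<dots> = (\<Sum>\<alpha>\<in>?SA. \<Sum>\<beta>\<in>?SB. Psi ?\<kappa> (EPn \<alpha> (A \<alpha>) \<beta> (B \<beta>)))"
    by (intro sum.cong refl Psi_sum fB finE)
  also have "\<dots> = (\<Sum>\<alpha>\<in>?SA. \<Sum>\<beta>\<in>?SB. \<Sum>j\<in>Jset \<kappa>1. sc (?C j) (pr (k + sum_list j) (?u j \<alpha>) (?v \<beta>)))"
    by (intro sum.cong refl CoreAB) (auto simp: lA lB l1 l2)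
  also have "\<dots> = (\<Sum>j\<in>Jset \<kappa>1. \<Sum>\<alpha>\<in>?SA. \<Sum>\<beta>\<in>?SB. sc (?C j) (pr (k + sum_list j) (?u j \<alpha>) (?v \<beta>)))"
    by (subst sum.swap, subst (2) sum.swap) (rule refl)
  also have "\<dots> = (\<Sum>j\<in>Jset \<kappa>1. sc (?C j) (pr (k + sum_list j) (\<Sum>\<alpha>\<in>?SA. ?u j \<alpha>) (\<Sum>\<beta>\<in>?SB. ?v \<beta>)))"
    by (simp add: pr_sum1 pr_sum2 scale_sum_right) (rule sum.cong[OF refl], rule sum.swap)
  also have "\<dots> = (\<Sum>j\<in>Jset \<kappa>1. sc (?C j) (pr (k + sum_list j) (Psi (map2 (-) \<kappa>1 j) A) (Psi \<kappa>2 B)))"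
    unfolding Psi_def ..
  finally show ?thesis unfolding Jset_def .
qed

theorem main:
  assumes "1 \<le> s" and "s \<le> n - 1"
    and A: "tens_ok s A" and B: "tens_ok (n - s) B"
    and X: "tens_ok (s - 1) X" and Z: "tens_ok (n - s - 1) Z"
  shows "Pmap sc d n (tens3 (s - 1) (n - s - 1) X y Z) (EP sc pr s (n - s) A B) =
    (\<Sum>\<kappa>\<in>{\<kappa>. X \<kappa> \<noteq> 0}. \<Sum>j\<in>{j. list_all2 (\<le>) j \<kappa>}.
       sc (X \<kappa> * (\<Prod>i<length \<kappa>. of_nat ((\<kappa> ! i) choose (j ! i))))
          (Pmap sc d 2 (poly1 (y * monom 1 (sum_list j)))
             (pseudo sc pr (Pmap sc d s (sing (map2 (-) \<kappa> j) 1) A)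
                           (Pmap sc d (n - s) Z B))))"
proof -
  obtain s' where s': "s = Suc s'" using assms(1) by (cases s) auto
  obtain m' where m': "n - s = Suc m'" using assms(1,2) by (cases "n - s") auto
  have n: "n = Suc (s' + Suc m')" using s' m' assms(2) by simp
  have e1: "s - 1 = s'" "n - s - 1 = m'" using s' m' by auto
  let ?SX = "{\<kappa>. X \<kappa> \<noteq> 0}" and ?SY = "{k. coeff y k \<noteq> 0}" and ?SZ = "{\<kappa>. Z \<kappa> \<noteq> 0}"
  have fX: "finite ?SX" and lX: "\<And>\<kappa>. X \<kappa> \<noteq> 0 \<Longrightarrow> length \<kappa> = s'" using X e1 by (auto simp: tens_ok_def)
  have fZ: "finite ?SZ" and lZ: "\<And>\<kappa>. Z \<kappa> \<noteq> 0 \<Longrightarrow> length \<kappa> = m'" using Z e1 by (auto simp: tens_ok_def)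
  have fY: "finite ?SY" by (rule fin_coeff)
  have A': "tens_ok (Suc s') A" using A s' by simp
  have B': "tens_ok (Suc m') B" using B m' by simp
  let ?T = "tens3 s' m' X y Z"
  let ?EP = "EP sc pr (Suc s') (Suc m') A B"
  let ?I = "(\<lambda>(\<kappa>1, k, \<kappa>2). \<kappa>1 @ k # \<kappa>2) ` (?SX \<times> ?SY \<times> ?SZ)"
  have Tval: "?T (\<kappa>1 @ k # \<kappa>2) = X \<kappa>1 * coeff y k * Z \<kappa>2" if "length \<kappa>1 = s'" "length \<kappa>2 = m'" for \<kappa>1 k \<kappa>2
    using that by (simp add: tens3_def nth_append)
  have suppT: "{\<kappa>. ?T \<kappa> \<noteq> 0} \<subseteq> ?I"
  proof
    fix \<kappa> assume "\<kappa> \<in> {\<kappa>. ?T \<kappa> \<noteq> 0}"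
    then have l: "length \<kappa> = s' + 1 + m'" and nz: "X (take s' \<kappa>) * coeff y (\<kappa> ! s') * Z (drop (s' + 1) \<kappa>) \<noteq> 0"
      by (auto simp: tens3_def split: if_splits)
    have "\<kappa> = take s' \<kappa> @ (\<kappa> ! s') # drop (s' + 1) \<kappa>" using l
      using id_take_nth_drop[of s' \<kappa>] by simp
    then show "\<kappa> \<in> ?I" using nz by (auto intro!: image_eqI[where x="(take s' \<kappa>, \<kappa> ! s', drop (s' + 1) \<kappa>)"])
  qed
  have fI: "finite ?I" using fX fY fZ by simp
  have lT: "length \<kappa> = s' + Suc m'" if "?T \<kappa> \<noteq> 0" for \<kappa> using that by (auto simp: tens3_def split: if_splits)
  have "Pmap sc d n ?T ?EP = Pmap sc d (Suc (s' + Suc m')) ?T ?EP" using n by simp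
  also have "\<dots> = (\<Sum>\<kappa>\<in>{\<kappa>. ?T \<kappa> \<noteq> 0}. sc (?T \<kappa>) (Psi \<kappa> ?EP))"
  proof (rule Pmap_formula)
    show "tens_ok (Suc (s' + Suc m')) ?EP" using tens_ok_EP[OF A' B'] by simp
    show "finite {\<kappa>. ?T \<kappa> \<noteq> 0}" using suppT fI finite_subset by blast
  qed (rule lT)
  also have "\<dots> = (\<Sum>\<kappa>\<in>?I. sc (?T \<kappa>) (Psi \<kappa> ?EP))"
    by (rule sum.mono_neutral_left[OF fI suppT]) auto
  also have "\<dots> = (\<Sum>(\<kappa>1, k, \<kappa>2)\<in>?SX \<times> ?SY \<times> ?SZ. sc (?T (\<kappa>1 @ k # \<kappa>2)) (Psi (\<kappa>1 @ k # \<kappa>2) ?EP))"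
  proof (subst sum.reindex)
    show "inj_on (\<lambda>(\<kappa>1, k, \<kappa>2). \<kappa>1 @ k # \<kappa>2) (?SX \<times> ?SY \<times> ?SZ)"
      using lX by (auto simp: inj_on_def append_eq_append_conv)
  qed (simp add: case_prod_beta comp_def)
  also have "\<dots> = (\<Sum>\<kappa>1\<in>?SX. \<Sum>k\<in>?SY. \<Sum>\<kappa>2\<in>?SZ. \<Sum>j\<in>{j. list_all2 (\<le>) j \<kappa>1}.
        sc (X \<kappa>1 * (\<Prod>i<length \<kappa>1. of_nat ((\<kappa>1 ! i) choose (j ! i))) * coeff y k * Z \<kappa>2)
          (pr (k + sum_list j) (Psi (map2 (-) \<kappa>1 j) A) (Psi \<kappa>2 B)))"
    unfolding sum.cartesian_product[symmetric]
  proof (rule sum.cong[OF refl], rule sum.cong[OF refl], rule sum.cong[OF refl])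
    fix \<kappa>1 k \<kappa>2 assume a: "\<kappa>1 \<in> ?SX" "\<kappa>2 \<in> ?SZ"
    have l: "length \<kappa>1 = s'" "length \<kappa>2 = m'" using a lX lZ by auto
    show "sc (?T (\<kappa>1 @ k # \<kappa>2)) (Psi (\<kappa>1 @ k # \<kappa>2) ?EP) =
      (\<Sum>j\<in>{j. list_all2 (\<le>) j \<kappa>1}.
        sc (X \<kappa>1 * (\<Prod>i<length \<kappa>1. of_nat ((\<kappa>1 ! i) choose (j ! i))) * coeff y k * Z \<kappa>2)
          (pr (k + sum_list j) (Psi (map2 (-) \<kappa>1 j) A) (Psi \<kappa>2 B)))"
      unfolding Tval[OF l] Core[OF A' B' l] by (simp add: scale_sum_right mult_ac)
  qed
  also have "\<dots> = (\<Sum>\<kappa>1\<in>?SX. \<Sum>j\<in>{j. list_all2 (\<le>) j \<kappa>1}. \<Sum>k\<in>?SY. \<Sum>\<kappa>2\<in>?SZ.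
        sc (X \<kappa>1 * (\<Prod>i<length \<kappa>1. of_nat ((\<kappa>1 ! i) choose (j ! i))) * coeff y k * Z \<kappa>2)
          (pr (k + sum_list j) (Psi (map2 (-) \<kappa>1 j) A) (Psi \<kappa>2 B)))"
  proof (rule sum.cong[OF refl])
    fix \<kappa>1
    show "(\<Sum>k\<in>?SY. \<Sum>\<kappa>2\<in>?SZ. \<Sum>j\<in>{j. list_all2 (\<le>) j \<kappa>1}.
        sc (X \<kappa>1 * (\<Prod>i<length \<kappa>1. of_nat ((\<kappa>1 ! i) choose (j ! i))) * coeff y k * Z \<kappa>2)
          (pr (k + sum_list j) (Psi (map2 (-) \<kappa>1 j) A) (Psi \<kappa>2 B))) =
      (\<Sum>j\<in>{j. list_all2 (\<le>) j \<kappa>1}. \<Sum>k\<in>?SY. \<Sum>\<kappa>2\<in>?SZ.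
        sc (X \<kappa>1 * (\<Prod>i<length \<kappa>1. of_nat ((\<kappa>1 ! i) choose (j ! i))) * coeff y k * Z \<kappa>2)
          (pr (k + sum_list j) (Psi (map2 (-) \<kappa>1 j) A) (Psi \<kappa>2 B)))"
      by (subst sum.swap, subst (2) sum.swap, rule refl)
  qed
  also have "\<dots> = (\<Sum>\<kappa>\<in>?SX. \<Sum>j\<in>{j. list_all2 (\<le>) j \<kappa>}.
       sc (X \<kappa> * (\<Prod>i<length \<kappa>. of_nat ((\<kappa> ! i) choose (j ! i))))
          (Pmap sc d 2 (poly1 (y * monom 1 (sum_list j)))
             (pseudo sc pr (Pmap sc d s (sing (map2 (-) \<kappa> j) 1) A)
                           (Pmap sc d (n - s) Z B))))"
  proof (rule sum.cong[OF refl], rule sum.cong[OF refl])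
    fix \<kappa>1 j assume k1: "\<kappa>1 \<in> ?SX" and j: "j \<in> {j. list_all2 (\<le>) j \<kappa>1}"
    have lj: "length (map2 (-) \<kappa>1 j) = s'" using k1 j lX by (auto simp: list_all2_lengthD)
    have PA: "Pmap sc d s (sing (map2 (-) \<kappa>1 j) 1) A = Psi (map2 (-) \<kappa>1 j) A"
      using Pmap_sing[OF A' lj] s' by simp
    have PB: "Pmap sc d (n - s) Z B = (\<Sum>\<kappa>2\<in>?SZ. sc (Z \<kappa>2) (Psi \<kappa>2 B))"
      unfolding m' by (rule Pmap_formula[OF B' fZ lZ])
    show "(\<Sum>k\<in>?SY. \<Sum>\<kappa>2\<in>?SZ.
        sc (X \<kappa>1 * (\<Prod>i<length \<kappa>1. of_nat ((\<kappa>1 ! i) choose (j ! i))) * coeff y k * Z \<kappa>2)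
          (pr (k + sum_list j) (Psi (map2 (-) \<kappa>1 j) A) (Psi \<kappa>2 B))) =
      sc (X \<kappa>1 * (\<Prod>i<length \<kappa>1. of_nat ((\<kappa>1 ! i) choose (j ! i))))
          (Pmap sc d 2 (poly1 (y * monom 1 (sum_list j)))
             (pseudo sc pr (Pmap sc d s (sing (map2 (-) \<kappa>1 j) 1) A)
                           (Pmap sc d (n - s) Z B)))"
      unfolding PA PB Pmap_pseudo sum_coeff_shift
      by (simp add: pr_sum1 pr_scale1 scale_sum_right mult.assoc)
  qed
  finally show ?thesis using s' m' e1 by simp
qed

end


theorem lemma3p0:
  fixes sc :: "'k::field_char_0 \<Rightarrow> 'c::ab_group_add \<Rightarrow> 'c"
    and d :: "'c \<Rightarrow> 'c" and pr :: "nat \<Rightarrow> 'c \<Rightarrow> 'c \<Rightarrow> 'c"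
    and n s :: nat and A B :: "nat list \<Rightarrow> 'c"
    and X Z :: "nat list \<Rightarrow> 'k" and y :: "'k poly"
  assumes "conformal_algebra sc d pr"
    and "1 \<le> s" and "s \<le> n - 1"
    and "tens_ok s A" and "tens_ok (n - s) B"
    and "tens_ok (s - 1) X" and "tens_ok (n - s - 1) Z"
  shows "Pmap sc d n (tens3 (s - 1) (n - s - 1) X y Z) (EP sc pr s (n - s) A B) =
    (\<Sum>\<kappa>\<in>{\<kappa>. X \<kappa> \<noteq> 0}. \<Sum>j\<in>{j. list_all2 (\<le>) j \<kappa>}.
       sc (X \<kappa> * (\<Prod>i<length \<kappa>. of_nat ((\<kappa> ! i) choose (j ! i))))
          (Pmap sc d 2 (poly1 (y * monom 1 (sum_list j)))
             (pseudo sc pr (Pmap sc d s (sing (map2 (-) \<kappa> j) 1) A)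
                           (Pmap sc d (n - s) Z B))))"
proof -
  interpret conf sc d pr by unfold_locales (rule assms(1))
  show ?thesis by (rule main[OF assms(2-7)])
qed

end
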